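(* For an integer $n\ge 3$, let $P_n$ be the prism graph of order $2n$. Then $$\phi_{\mathbb{C}}(P_n) = \begin{cases} 2 & \text{if } n \text{ is even},\\ 1 + 2\sin\left(\frac{\pi}{6}\cdot\frac{n}{n-1}\right) & \text{if } n \equiv 1 \text{ or } 3 \pmod 6,\\ 1 + 2\sin\left(\frac{\pi}{6}\cdot\frac{n+1}{n}\right) & \text{if } n \equiv 5 \pmod 6.\end{cases}$$
   Context: The prism graph $P_n$ ($n \ge 3$) is the Cartesian product of a cycle of length $n$ with $K_2$: two disjoint $n$-cycles $a_0\cdots a_{n-1}$ and $b_0\cdots b_{n-1}$ together with the edges $a_jb_j$ for all $j$. For a real number $r \geq 2$, a complex nowhere-zero $r$-flow on a graph $G$ is an orientation of $G$ together with a map $\varphi\colon E(G)\to\mathbb{C}$ such that $1 \le |\varphi(e)| \le r-1$ for every edge $e$ and, at every vertex, the sum of the values on incoming edges equals the sum of the values on outgoing edges. For a bridgeless graph $G$, the complex flow number $\phi_{\mathbb{C}}(G)$ is the minimum (equivalently infimum; it is attained) of the real numbers $r\ge 2$ such that $G$ admits a complex nowhere-zero $r$-flow. *)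

theory Defs
  imports Complex_Main
begin

text \<open>A finite simple graph is given by a vertex set V and a set E of 2-element
subsets of V.\<close>

definition orientation :: "'a set set \<Rightarrow> ('a \<times> 'a) set \<Rightarrow> bool" where
  "orientation E D \<longleftrightarrow>
     (\<forall>a\<in>D. {fst a, snd a} \<in> E) \<and> (\<forall>e\<in>E. \<exists>!a. a \<in> D \<and> {fst a, snd a} = e)"

definition complex_nz_flow :: "'a set \<Rightarrow> 'a set set \<Rightarrow> real \<Rightarrow> bool" where
  "complex_nz_flow V E r \<longleftrightarrow>
     (\<exists>D (\<phi> :: 'a \<times> 'a \<Rightarrow> complex).
        orientation E D \<and>
        (\<forall>a\<in>D. 1 \<le> cmod (\<phi> a) \<and> cmod (\<phi> a) \<le> r - 1) \<and>
        (\<forall>v\<in>V. (\<Sum>a\<in>{a\<in>D. snd a = v}. \<phi> a) = (\<Sum>a\<in>{a\<in>D. fst a = v}. \<phi> a)))"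

definition complex_flow_number :: "'a set \<Rightarrow> 'a set set \<Rightarrow> real" where
  "complex_flow_number V E = Inf {r. r \<ge> 2 \<and> complex_nz_flow V E r}"

text \<open>Prism graph P_n: vertices (False, j) = a_j and (True, j) = b_j for j < n.\<close>

definition prism_vertices :: "nat \<Rightarrow> (bool \<times> nat) set" where
  "prism_vertices n = UNIV \<times> {..<n}"

definition prism_edges :: "nat \<Rightarrow> (bool \<times> nat) set set" where
  "prism_edges n =
     {{(b, j), (b, (j + 1) mod n)} | b j. j < n} \<union> {{(False, j), (True, j)} | j. j < n}"

end

theory Submission
  imports Defs "HOL-Analysis.Complex_Transcendental"
begin


lemma trig_consts:
  "cos (pi/3) = 1/2" "sin (pi/3) = sqrt 3/2" "cos (pi/6) = sqrt 3/2" "sin(pi/6) = 1/2"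
  "cos (2 * pi/3) = -1/2" "sin (2 * pi/3) = sqrt 3/2"
proof -
  show "cos (pi/3) = 1/2" "sin (pi/3) = sqrt 3/2" "cos (pi/6) = sqrt 3/2" "sin(pi/6) = 1/2"
    by (simp_all add: cos_60 sin_60 cos_30 sin_30)
  have e: "2 * pi/3 = pi - pi/3" by simp
  show "cos (2 * pi/3) = -1/2" unfolding e cos_diff by (simp add: cos_60 sin_60)
  show "sin (2 * pi/3) = sqrt 3/2" unfolding e sin_diff by (simp add: cos_60 sin_60)
qed

lemma idB:
  fixes u v :: real
  shows "1 - (4 * cos u^2 + 4 * cos v^2 - 8 * cos u * cos v * cos (u+v-pi/3))
       = 4* sin(u+v-pi/6) * (cos(u-v) - cos(2 * pi/3-u-v))"
proof -
  have s3: "sqrt 3 ^ 2 = 3" by simp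
  show ?thesis
    apply (simp add: cos_diff sin_diff cos_add sin_add trig_consts)
    using sin_cos_squared_add[of u] sin_cos_squared_add[of v] s3
    by algebra
qed

lemma idF:
  fixes u v h :: real
  shows "4 * cos u^2 + 4 * cos v^2 - 8 * cos u * cos v * cos (u+v+2 * h)
       = (2* sin h + sin(2 * u+h) + sin(2 * v+h))^2 + (cos(2 * v+h) - cos(2 * u+h))^2"
proof -
  show ?thesis
    apply (simp add: cos_diff sin_diff cos_add sin_add sin_double cos_double)
    using sin_cos_squared_add[of u] sin_cos_squared_add[of v] sin_cos_squared_add[of h]
    by algebra
qed

lemma sin_ge_sym:
  fixes a t :: real
  assumes "0 \<le> a" "a \<le> pi/2" "a \<le> t" "t \<le> pi - a"
  shows "sin a \<le> sin t"
proof (cases "t \<le> pi/2")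
  case True
  then show ?thesis using assms by (intro sin_monotone_2pi_le) auto
next
  case False
  have "sin a \<le> sin (pi - t)" using assms False by (intro sin_monotone_2pi_le) auto
  then show ?thesis by simp
qed

lemma B_ineq:
  fixes u v :: real
  assumes "0 \<le> u" "u \<le> pi/3" "0 \<le> v" "v \<le> pi/3" "pi/3 \<le> u + v"
  shows "4 * cos u^2 + 4 * cos v^2 - 8 * cos u * cos v * cos (u+v-pi/3) \<le> 1"
proof -
  have 1: "0 \<le> sin(u+v-pi/6)" using assms by (intro sin_ge_zero) auto
  have "cos (2 * pi/3-u-v) \<le> cos \<bar>u-v\<bar>"
    using assms by (intro cos_monotone_0_pi_le) auto
  then have 2: "0 \<le> cos(u-v) - cos(2 * pi/3-u-v)"
    by simp
  have "0 \<le> 4* sin(u+v-pi/6) * (cos(u-v) - cos(2 * pi/3-u-v))" using 1 2 by simp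
  then show ?thesis using idB[of u v] by linarith
qed

lemma F_ineq:
  fixes u v w :: real
  assumes "0 \<le> w" "w \<le> u" "u \<le> pi/3" "w \<le> v" "v \<le> pi/3"
  shows "4 * cos w^2 \<le> 4 * cos u^2 + 4 * cos v^2 - 8 * cos u * cos v * cos (u+v+pi/3-2 * w)"
proof -
  define h where "h = pi/6 - w"
  have e: "u+v+pi/3-2 * w = u+v+2 * h" by (simp add: h_def)
  have s1: "sin (pi/6 + w) \<le> sin (2 * u+h)"
    using assms by (intro sin_ge_sym) (auto simp: h_def)
  have s2: "sin (pi/6 + w) \<le> sin (2 * v+h)"
    using assms by (intro sin_ge_sym) (auto simp: h_def)
  have s3: "2* sin h + 2* sin (pi/6 + w) = 2 * cos w"
    by (simp add: h_def sin_diff sin_add trig_consts)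
  have cw: "0 \<le> cos w" using assms by (intro cos_ge_zero) auto
  have "2 * cos w \<le> 2* sin h + sin(2 * u+h) + sin(2 * v+h)" using s1 s2 s3 by linarith
  then have "(2 * cos w)^2 \<le> (2* sin h + sin(2 * u+h) + sin(2 * v+h))^2"
    using cw by (intro power_mono) auto
  also have "\<dots> \<le> (2* sin h + sin(2 * u+h) + sin(2 * v+h))^2 + (cos(2 * v+h) - cos(2 * u+h))^2"
    by simp
  also have "\<dots> = 4 * cos u^2 + 4 * cos v^2 - 8 * cos u * cos v * cos (u+v+pi/3-2 * w)"
    unfolding e by (rule idF[symmetric])
  finally show ?thesis by (simp add: power_mult_distrib)
qed


lemma law_cos:
  fixes P Q :: complex
  assumes "P \<noteq> 0" "Q \<noteq> 0"
  shows "cmod (Q - P)^2 = cmod P^2 + cmod Q^2 - 2 * cmod P * cmod Q * cos(Arg(Q/P))"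
proof -
  have z: "Q/P \<noteq> 0" using assms by simp
  have nP: "cmod P > 0" "cmod Q > 0" using assms by auto
  have "cmod P * cmod Q * cos (Arg (Q/P)) = cmod P * cmod Q * (Re (Q/P) / cmod (Q/P))"
    using cos_Arg[OF z] by simp
  also have "\<dots> = Re Q * Re P + Im Q * Im P"
  proof -
    have "Re (Q/P) = (Re Q * Re P + Im Q * Im P) / cmod P^2" by (simp add: Re_divide cmod_power2)
    then show ?thesis using nP by (simp add: norm_divide field_simps power2_eq_square)
  qed
  finally have e: "cmod P * cmod Q * cos (Arg (Q/P)) = Re Q * Re P + Im Q * Im P" .
  show ?thesis unfolding cmod_power2 using e by (simp add: power2_eq_square algebra_simps)
qed

lemma arccos_half: "arccos (1/2) = pi/3"
  using arccos_cos[of "pi/3"] by (simp add: cos_60)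

lemma arccos_props:
  fixes r :: real
  assumes "1 \<le> r" "r \<le> 2"
  shows "cos (arccos (r/2)) = r/2" "0 \<le> arccos (r/2)" "arccos (r/2) \<le> pi/3"
proof -
  show "cos (arccos (r/2)) = r/2" using assms by (intro cos_arccos) auto
  show "0 \<le> arccos (r/2)" using assms by (intro arccos_lbound) auto
  have "arccos (r/2) \<le> arccos (1/2)" using assms by (intro arccos_le_arccos) auto
  then show "arccos (r/2) \<le> pi/3" by (simp add: arccos_half)
qed

lemma stepB:
  fixes \<rho> \<sigma> \<zeta> a :: real
  assumes r: "1 \<le> \<rho>" "\<rho> \<le> 2" "1 \<le> \<sigma>" "\<sigma> \<le> 2" and z: "1 \<le> \<zeta>"
    and law: "\<zeta>^2 = \<rho>^2 + \<sigma>^2 - 2* \<rho>* \<sigma>*cos a" and a: "0 \<le> a" "a \<le> pi"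
  shows "arccos (\<rho>/2) + arccos (\<sigma>/2) - pi/3 \<le> a"
proof (rule ccontr)
  define u where "u = arccos (\<rho>/2)"
  define v where "v = arccos (\<sigma>/2)"
  note U = arccos_props[OF r(1,2), folded u_def]
  note V = arccos_props[OF r(3,4), folded v_def]
  assume "\<not> ?thesis"
  then have lt: "a < u + v - pi/3" by (simp add: u_def v_def)
  have "cos (u+v-pi/3) < cos a"
    using lt a U V by (intro cos_monotone_0_pi) auto
  then have "2* \<rho>* \<sigma>*cos (u+v-pi/3) < 2* \<rho>* \<sigma>*cos a" using r by simp
  then have "\<zeta>^2 < \<rho>^2 + \<sigma>^2 - 2* \<rho>* \<sigma>*cos (u+v-pi/3)" using law by linarith
  also have "\<dots> = 4 * cos u^2 + 4 * cos v^2 - 8 * cos u * cos v * cos (u+v-pi/3)"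
  proof -
    have e: "\<rho> = 2 * cos u" "\<sigma> = 2 * cos v" using U(1) V(1) r by auto
    show ?thesis by (simp only: e) (simp add: power2_eq_square)
  qed
  also have "\<dots> \<le> 1" using U V lt a by (intro B_ineq) auto
  finally have "\<zeta>^2 < 1" .
  moreover have "1 \<le> \<zeta>^2" using z by (simp add: one_le_power)
  ultimately show False by simp
qed

lemma stepF:
  fixes \<rho> \<sigma> \<zeta> a R :: real
  assumes r: "1 \<le> \<rho>" "\<rho> \<le> R" "1 \<le> \<sigma>" "\<sigma> \<le> R" "R \<le> 2" and z: "0 \<le> \<zeta>" "\<zeta> \<le> R"
    and law: "\<zeta>^2 = \<rho>^2 + \<sigma>^2 - 2* \<rho>* \<sigma>*cos a" and a: "0 \<le> a" "a \<le> pi"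
  shows "a \<le> arccos (\<rho>/2) + arccos (\<sigma>/2) + pi/3 - 2 * arccos (R/2)"
proof (rule ccontr)
  define u where "u = arccos (\<rho>/2)"
  define v where "v = arccos (\<sigma>/2)"
  define w where "w = arccos (R/2)"
  note U = arccos_props[of \<rho>, folded u_def]
  note V = arccos_props[of \<sigma>, folded v_def]
  note W = arccos_props[of R, folded w_def]
  have wu: "w \<le> u" unfolding u_def w_def using r by (intro arccos_le_arccos) auto
  have wv: "w \<le> v" unfolding v_def w_def using r by (intro arccos_le_arccos) auto
  assume "\<not> ?thesis"
  then have lt: "u+v+pi/3-2 * w < a" by (simp add: u_def v_def w_def)
  have "cos a < cos (u+v+pi/3-2 * w)"
    using lt a U V W r wu wv by (intro cos_monotone_0_pi) auto
  then have "2* \<rho>* \<sigma>*cos a < 2* \<rho>* \<sigma>*cos (u+v+pi/3-2 * w)" using r by simp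
  then have "\<rho>^2 + \<sigma>^2 - 2* \<rho>* \<sigma>*cos (u+v+pi/3-2 * w) < \<zeta>^2" using law by linarith
  moreover have "4 * cos w^2 \<le> 4 * cos u^2 + 4 * cos v^2 - 8 * cos u * cos v * cos (u+v+pi/3-2 * w)"
    using U V W r wu wv by (intro F_ineq) auto
  moreover have "4 * cos w^2 = R^2" "4 * cos u^2 + 4 * cos v^2 - 8 * cos u * cos v * cos (u+v+pi/3-2 * w)
      = \<rho>^2 + \<sigma>^2 - 2* \<rho>* \<sigma>*cos (u+v+pi/3-2 * w)"
    using U(1) V(1) W(1) r by (auto simp: power2_eq_square)
  ultimately have "R^2 < \<zeta>^2" by linarith
  moreover have "\<zeta>^2 \<le> R^2" using z by (intro power_mono) auto
  ultimately show False by simp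
qed

lemma stepL:
  fixes \<rho> \<sigma> \<zeta> a R :: real
  assumes r: "1 \<le> \<rho>" "\<rho> \<le> R" "1 \<le> \<sigma>" "\<sigma> \<le> R" "R^2 \<le> 2" and z: "1 \<le> \<zeta>"
    and law: "\<zeta>^2 = \<rho>^2 + \<sigma>^2 - 2* \<rho>* \<sigma>*cos a" and a: "0 \<le> a" "a \<le> pi"
  shows "arccos (1 - 1/(2 * R^2)) \<le> a"
proof -
  have R1: "1 \<le> R" using r by simp
  have key: "R^2 * (q-p)^2 + p * q \<le> R^2" if h: "1 \<le> p" "p \<le> q" "q \<le> R" for p q :: real
  proof -
    have "(q-p)^2 \<le> (R-p)^2" using h by (intro power_mono) auto
    then have 1: "R^2 * (q-p)^2 \<le> R^2 * (R-p)^2" by (intro mult_left_mono) auto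
    have 2: "p * q \<le> p * R" using h by (intro mult_left_mono) auto
    have "R * (R-p) \<le> R * (R-1)" using h R1 by (intro mult_left_mono) auto
    also have "\<dots> \<le> 1" using r(5) R1 by (simp add: power2_eq_square algebra_simps)
    finally have "(R-p) * (R * (R-p)) \<le> (R-p) * 1" using h by (intro mult_left_mono) auto
    then have "R * (R-p)^2 + p \<le> R" by (simp add: power2_eq_square algebra_simps)
    then have "R * (R * (R-p)^2 + p) \<le> R * R" using R1 by (intro mult_left_mono) auto
    then show ?thesis using 1 2 by (simp add: power2_eq_square algebra_simps)
  qed
  have k: "R^2 * (\<rho>-\<sigma>)^2 + \<rho>* \<sigma> \<le> R^2"
  proof (cases "\<rho> \<le> \<sigma>")
    case True
    then show ?thesis using key[of \<rho> \<sigma>] r by (simp add: power2_commute)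
  next
    case False
    then show ?thesis using key[of \<sigma> \<rho>] r by (simp add: mult.commute)
  qed
  have z2: "1 \<le> \<zeta>^2" using z by (simp add: one_le_power)
  have ps: "0 < \<rho>* \<sigma>" using r by simp
  have "R^2 * (2* \<rho>* \<sigma>*cos a) \<le> R^2 * (\<rho>^2+\<sigma>^2-1)"
    using law z2 by (intro mult_left_mono) auto
  also have "\<dots> \<le> 2* \<rho>* \<sigma>*R^2 - \<rho>* \<sigma>" using k by (simp add: power2_eq_square algebra_simps)
  finally have "(\<rho>* \<sigma>) * (2 * R^2 * cos a) \<le> (\<rho>* \<sigma>) * (2 * R^2 - 1)" by (simp add: algebra_simps)
  then have "2 * R^2 * cos a \<le> 2 * R^2 - 1" using ps by (rule mult_left_le_imp_le)
  then have c: "cos a \<le> 1 - 1/(2 * R^2)" using R1 by (simp add: field_simps)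
  have "arccos (1 - 1/(2 * R^2)) \<le> arccos (cos a)"
    using c R1 by (intro arccos_le_arccos) auto
  then show ?thesis using a by (simp add: arccos_cos)
qed


lemma sum_shift_mod:
  fixes f :: "nat \<Rightarrow> 'a::comm_monoid_add"
  assumes "0 < n"
  shows "(\<Sum>j<n. f (Suc j mod n)) = (\<Sum>j<n. f j)"
proof -
  obtain m where m: "n = Suc m" using assms by (cases n) auto
  have "(\<Sum>j<Suc m. f (Suc j mod Suc m)) = (\<Sum>j<m. f (Suc j mod Suc m)) + f 0"
    by simp
  also have "(\<Sum>j<m. f (Suc j mod Suc m)) = (\<Sum>j<m. f (Suc j))"
    by (intro sum.cong) auto
  also have "(\<Sum>j<m. f (Suc j)) + f 0 = (\<Sum>j<Suc m. f j)"
    by (subst sum.lessThan_Suc_shift) (simp add: add.commute)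
  finally show ?thesis using m by simp
qed

lemma prod_shift_mod:
  fixes f :: "nat \<Rightarrow> 'a::comm_monoid_mult"
  assumes "0 < n"
  shows "(\<Prod>j<n. f (Suc j mod n)) = (\<Prod>j<n. f j)"
proof -
  obtain m where m: "n = Suc m" using assms by (cases n) auto
  have "(\<Prod>j<Suc m. f (Suc j mod Suc m)) = (\<Prod>j<m. f (Suc j mod Suc m)) * f 0"
    by simp
  also have "(\<Prod>j<m. f (Suc j mod Suc m)) = (\<Prod>j<m. f (Suc j))"
    by (intro prod.cong) auto
  also have "(\<Prod>j<m. f (Suc j)) * f 0 = (\<Prod>j<Suc m. f j)"
    by (subst prod.lessThan_Suc_shift) (simp add: mult.commute)
  finally show ?thesis using m by simp
qed

lemma cis_sum: fixes n :: nat shows "cis (\<Sum>j<n. f j) = (\<Prod>j<n. cis (f j))"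
  by (induction n) (simp_all add: cis_mult[symmetric])

lemma sgn_prod_complex: fixes n :: nat shows "sgn (\<Prod>j<n. (f j :: complex)) = (\<Prod>j<n. sgn (f j))"
  by (induction n) (simp_all add: sgn_mult)

lemma winding:
  fixes x :: "nat \<Rightarrow> complex"
  assumes "0 < n" "\<forall>j<n. x j \<noteq> 0"
  shows "\<exists>k::int. (\<Sum>j<n. Arg (x (Suc j mod n) / x j)) = 2 * pi * k"
proof -
  have nz: "x (Suc j mod n) / x j \<noteq> 0" if "j < n" for j
    using assms that by auto
  have "cis (\<Sum>j<n. Arg (x (Suc j mod n) / x j)) = (\<Prod>j<n. cis (Arg (x (Suc j mod n) / x j)))"
    by (rule cis_sum)
  also have "\<dots> = (\<Prod>j<n. sgn (x (Suc j mod n) / x j))"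
  proof (rule prod.cong)
    fix j assume "j \<in> {..<n}"
    then show "cis (Arg (x (Suc j mod n) / x j)) = sgn (x (Suc j mod n) / x j)"
      using nz[of j] by (intro cis_Arg) auto
  qed simp
  also have "\<dots> = sgn (\<Prod>j<n. x (Suc j mod n) / x j)"
    by (simp add: sgn_prod_complex)
  also have "(\<Prod>j<n. x (Suc j mod n) / x j) = (\<Prod>j<n. x (Suc j mod n)) / (\<Prod>j<n. x j)"
    by (simp add: prod_dividef)
  also have "\<dots> = 1"
    using prod_shift_mod[OF assms(1), of x] assms by (simp add: prod_zero_iff)
  finally have "cis (\<Sum>j<n. Arg (x (Suc j mod n) / x j)) = 1" by simp
  then have "cos (\<Sum>j<n. Arg (x (Suc j mod n) / x j)) = 1"
    by (simp add: complex_eq_iff)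
  then obtain k :: int where "(\<Sum>j<n. Arg (x (Suc j mod n) / x j)) = k * 2 * pi"
    by (auto simp: cos_one_2pi_int)
  then show ?thesis by (intro exI[of _ k]) simp
qed

lemma trans_exists:
  assumes "0 < n" "\<exists>j<n. s j" "\<exists>j<n. \<not> s j"
  shows "\<exists>j<n. \<not> s j \<and> s (Suc j mod n)"
proof (rule ccontr)
  assume H: "\<not> ?thesis"
  obtain i where i: "i < n" "\<not> s i" using assms by auto
  have all: "\<not> s ((i + d) mod n)" for d
  proof (induction d)
    case 0 then show ?case using i by simp
  next
    case (Suc d)
    have "(i + Suc d) mod n = Suc ((i + d) mod n) mod n" by (simp add: mod_Suc_eq)
    moreover have "(i + d) mod n < n" using assms by simp
    ultimately show ?case using H Suc by auto
  qed
  obtain j where j: "j < n" "s j" using assms by auto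
  have "(i + (j + n - i)) mod n = j" using i j by simp
  then show False using all[of "j + n - i"] j by simp
qed


lemma beta_sum:
  fixes \<mu> :: "nat \<Rightarrow> real" and s :: "nat \<Rightarrow> bool"
  assumes n: "0 < n" and mu: "\<forall>j<n. 0 \<le> \<mu> j \<and> \<mu> j \<le> \<delta>/2"
    and ex: "\<exists>j<n. s j" "\<exists>j<n. \<not> s j"
  shows "(\<Sum>j<n. (if s j then \<delta> - \<mu> j - \<mu> (Suc j mod n) else \<mu> j + \<mu> (Suc j mod n)))
          \<le> (real n - 1) * \<delta>"
proof -
  define \<tau> where "\<tau> j = (if s j then -1 else (1::real))" for j
  define t where "t j = (if \<not> s j \<and> s (Suc j mod n) then \<delta> else 0)" for j
  have d0: "0 \<le> \<delta>" using mu n by force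
  have "(\<Sum>j<n. (if s j then \<delta> - \<mu> j - \<mu> (Suc j mod n) else \<mu> j + \<mu> (Suc j mod n)))
      = (\<Sum>j<n. (if s j then \<delta> else 0) + \<tau> j * \<mu> (Suc j mod n)) + (\<Sum>j<n. \<tau> j * \<mu> j)"
    by (simp add: sum.distrib[symmetric]) (intro sum.cong, auto simp: \<tau>_def)
  also have "(\<Sum>j<n. \<tau> j * \<mu> j) = (\<Sum>j<n. \<tau> (Suc j mod n) * \<mu> (Suc j mod n))"
    using sum_shift_mod[OF n, of "\<lambda>j. \<tau> j * \<mu> j"] by simp
  also have "(\<Sum>j<n. (if s j then \<delta> else 0) + \<tau> j * \<mu> (Suc j mod n)) + \<dots>
      = (\<Sum>j<n. (if s j then \<delta> else 0) + (\<tau> j + \<tau> (Suc j mod n)) * \<mu> (Suc j mod n))"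
    by (simp add: sum.distrib[symmetric] algebra_simps)
  also have "\<dots> \<le> (\<Sum>j<n. \<delta> - t j)"
  proof (rule sum_mono)
    fix j assume "j \<in> {..<n}"
    then have "Suc j mod n < n" using n by simp
    then have m: "0 \<le> \<mu> (Suc j mod n)" "\<mu> (Suc j mod n) \<le> \<delta>/2" using mu by auto
    show "(if s j then \<delta> else 0) + (\<tau> j + \<tau> (Suc j mod n)) * \<mu> (Suc j mod n) \<le> \<delta> - t j"
      using m d0 by (auto simp: \<tau>_def t_def)
  qed
  also have "\<dots> = real n * \<delta> - (\<Sum>j<n. t j)" by (simp add: sum_subtractf)
  also have "\<dots> \<le> real n * \<delta> - \<delta>"
  proof -
    obtain j0 where j0: "j0 < n" "\<not> s j0" "s (Suc j0 mod n)" using trans_exists[OF n ex] by auto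
    have "t j0 \<le> (\<Sum>j<n. t j)"
      using j0 d0 by (intro member_le_sum) (auto simp: t_def)
    moreover have "t j0 = \<delta>" using j0 by (simp add: t_def)
    ultimately show ?thesis by simp
  qed
  finally show ?thesis by (simp add: algebra_simps)
qed

lemma comb_mixed:
  fixes \<mu> a :: "nat \<Rightarrow> real" and s :: "nat \<Rightarrow> bool"
  assumes n: "0 < n" and mu: "\<forall>j<n. 0 \<le> \<mu> j \<and> \<mu> j \<le> \<delta>/2"
    and up: "\<forall>j<n. a j \<le> pi/3 + \<delta> - \<mu> j - \<mu> (Suc j mod n)"
    and lo: "\<forall>j<n. pi/3 - \<mu> j - \<mu> (Suc j mod n) \<le> a j"
    and ex: "\<exists>j<n. s j" "\<exists>j<n. \<not> s j"
  shows "(\<Sum>j<n. (if s j then a j - pi/3 else pi/3 - a j)) \<le> (real n - 1) * \<delta>"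
proof -
  have "(\<Sum>j<n. (if s j then a j - pi/3 else pi/3 - a j))
      \<le> (\<Sum>j<n. (if s j then \<delta> - \<mu> j - \<mu> (Suc j mod n) else \<mu> j + \<mu> (Suc j mod n)))"
    using up lo by (intro sum_mono) fastforce
  also have "\<dots> \<le> (real n - 1) * \<delta>" by (rule beta_sum[OF n mu ex])
  finally show ?thesis .
qed

lemma sum_pm_card:
  fixes s :: "nat \<Rightarrow> bool"
  shows "(\<Sum>j<n. (if s j then 1 else -1::real)) = 2 * real (card {j\<in>{..<n}. s j}) - real n"
proof -
  have "(\<Sum>j<n. (if s j then 1 else -1::real)) = (\<Sum>j<n. 2 * (if s j then 1 else 0) - 1)"
    by (intro sum.cong) auto
  also have "\<dots> = 2 * (\<Sum>j<n. (if s j then 1 else 0::real)) - real n"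
    by (simp add: sum_subtractf sum_distrib_left)
  also have "(\<Sum>j<n. (if s j then 1 else 0::real)) = real (card {j\<in>{..<n}. s j})"
    by (simp add: sum.If_cases Int_def)
  finally show ?thesis .
qed

lemma comb_main:
  fixes \<mu> g :: "nat \<Rightarrow> real" and k :: int and n :: nat
  assumes odd: "odd n" and n3: "3 \<le> n" and d0: "0 \<le> \<delta>"
    and mu: "\<forall>j<n. 0 \<le> \<mu> j \<and> \<mu> j \<le> \<delta>/2"
    and up: "\<forall>j<n. \<bar>g j\<bar> \<le> pi/3 + \<delta> - \<mu> j - \<mu> (Suc j mod n)"
    and lo: "\<forall>j<n. pi/3 - \<mu> j - \<mu> (Suc j mod n) \<le> \<bar>g j\<bar>"
    and loL: "\<forall>j<n. pi/3 - \<delta>L \<le> \<bar>g j\<bar>"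
    and sum: "(\<Sum>j<n. g j) = 2 * pi * k"
  shows "pi/3 \<le> (real n - 1) * \<delta> \<or> pi/3 \<le> real n * \<delta>L \<or> (n mod 6 = 5 \<and> pi/3 \<le> real n * \<delta>)"
proof -
  have n0: "0 < n" using n3 by simp
  have big: "pi/3 \<le> (real n - 1) * \<delta>" if h: "pi \<le> real n * \<delta>"
  proof -
    have h2: "3 \<le> real n * 2" using n3 by simp
    have "\<delta>*3 \<le> \<delta>*(real n * 2)" using h2 d0 by (rule mult_left_mono)
    then have "real n * \<delta> \<le> 3 * ((real n - 1) * \<delta>)" by (simp add: algebra_simps)
    then show ?thesis using h by simp
  qed
  consider (mixed) "\<exists>j<n. 0 \<le> g j" "\<exists>j<n. \<not> 0 \<le> g j" | (pos) "\<forall>j<n. 0 \<le> g j"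
    | (neg) "\<forall>j<n. g j < 0" by force
  then show ?thesis
  proof cases
    case mixed
    define s where "s j = (0 \<le> g j)" for j
    define c where "c = card {j\<in>{..<n}. s j}"
    have S1: "(\<Sum>j<n. (if s j then \<bar>g j\<bar> - pi/3 else pi/3 - \<bar>g j\<bar>)) \<le> (real n - 1) * \<delta>"
      using mixed by (intro comb_mixed[OF n0 mu up lo]) (auto simp: s_def)
    have S2: "(\<Sum>j<n. (if \<not> s j then \<bar>g j\<bar> - pi/3 else pi/3 - \<bar>g j\<bar>)) \<le> (real n - 1) * \<delta>"
      using mixed by (intro comb_mixed[OF n0 mu up lo]) (auto simp: s_def)
    have e1: "(\<Sum>j<n. (if s j then \<bar>g j\<bar> - pi/3 else pi/3 - \<bar>g j\<bar>))
        = (\<Sum>j<n. g j) - pi/3 * (\<Sum>j<n. (if s j then 1 else -1::real))"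
    proof -
      have "(\<Sum>j<n. (if s j then \<bar>g j\<bar> - pi/3 else pi/3 - \<bar>g j\<bar>))
          = (\<Sum>j<n. g j - pi/3 * (if s j then 1 else -1))"
        by (intro sum.cong) (auto simp: s_def)
      also have "\<dots> = (\<Sum>j<n. g j) - pi/3 * (\<Sum>j<n. (if s j then 1 else -1::real))"
        by (simp add: sum_subtractf sum_distrib_left)
      finally show ?thesis .
    qed
    have e2: "(\<Sum>j<n. (if \<not> s j then \<bar>g j\<bar> - pi/3 else pi/3 - \<bar>g j\<bar>))
        = - (\<Sum>j<n. (if s j then \<bar>g j\<bar> - pi/3 else pi/3 - \<bar>g j\<bar>))"
      by (simp add: sum_negf[symmetric]) (intro sum.cong, auto)
    define K :: int where "K = 6 * k - 2 * int c + int n"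
    have oK: "odd K" using odd by (simp add: K_def)
    have eK: "(\<Sum>j<n. (if s j then \<bar>g j\<bar> - pi/3 else pi/3 - \<bar>g j\<bar>)) = pi/3 * real_of_int K"
      unfolding e1 sum sum_pm_card K_def c_def by (simp add: algebra_simps)
    have "K \<ge> 1 \<or> K \<le> -1" using oK by presburger
    then have "pi/3 \<le> (real n - 1) * \<delta>"
    proof
      assume "K \<ge> 1"
      then have "pi/3 * 1 \<le> pi/3 * real_of_int K" by (intro mult_left_mono) auto
      then show ?thesis using S1 eK by linarith
    next
      assume "K \<le> -1"
      then have "pi/3 * 1 \<le> pi/3 * (- real_of_int K)" by (intro mult_left_mono) auto
      then show ?thesis using S2 e2 eK by linarith
    qed
    then show ?thesis by simp
  next
    case pos
    have "(\<Sum>j<n. g j) \<le> (\<Sum>j<n. pi/3 + \<delta>)"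
    proof (rule sum_mono)
      fix j assume "j \<in> {..<n}"
      then have j: "j < n" "Suc j mod n < n" using n0 by auto
      have "0 \<le> \<mu> j" "0 \<le> \<mu> (Suc j mod n)" using mu j by auto
      then show "g j \<le> pi/3 + \<delta>" using up[rule_format, OF j(1)] pos j by auto
    qed
    then have A: "2 * pi * k \<le> real n * (pi/3 + \<delta>)" using sum by simp
    have "(\<Sum>j<n. pi/3 - \<delta>L) \<le> (\<Sum>j<n. g j)"
      using pos loL by (intro sum_mono) fastforce
    then have B: "real n * (pi/3 - \<delta>L) \<le> 2 * pi * k" using sum by simp
    define K :: int where "K = 6 * k - int n"
    have oK: "odd K" using odd by (simp add: K_def)
    have A': "pi/3 * real_of_int K \<le> real n * \<delta>" using A by (simp add: K_def algebra_simps)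
    have B': "pi/3 * (- real_of_int K) \<le> real n * \<delta>L" using B by (simp add: K_def algebra_simps)
    have "K \<le> -1 \<or> n mod 6 = 5 \<and> K \<ge> 1 \<or> K \<ge> 3" using oK odd unfolding K_def by presburger
    then show ?thesis
    proof (elim disjE conjE)
      assume "K \<le> -1"
      then have "pi/3 * 1 \<le> pi/3 * (- real_of_int K)" by (intro mult_left_mono) auto
      then have "pi/3 \<le> real n * \<delta>L" using B' by linarith
      then show ?thesis by simp
    next
      assume "n mod 6 = 5" "K \<ge> 1"
      then have "pi/3 * 1 \<le> pi/3 * real_of_int K" by (intro mult_left_mono) auto
      then have "pi/3 \<le> real n * \<delta>" using A' by linarith
      then show ?thesis using \<open>n mod 6 = 5\<close> by simp
    next
      assume "K \<ge> 3"
      then have "pi/3 * 3 \<le> pi/3 * real_of_int K" by (intro mult_left_mono) auto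
      then have "pi \<le> real n * \<delta>" using A' by linarith
      then show ?thesis using big by simp
    qed
  next
    case neg
    have "(\<Sum>j<n. - g j) \<le> (\<Sum>j<n. pi/3 + \<delta>)"
    proof (rule sum_mono)
      fix j assume "j \<in> {..<n}"
      then have j: "j < n" "Suc j mod n < n" using n0 by auto
      have "0 \<le> \<mu> j" "0 \<le> \<mu> (Suc j mod n)" using mu j by auto
      then show "- g j \<le> pi/3 + \<delta>" using up[rule_format, OF j(1)] neg j by auto
    qed
    then have A: "- (2 * pi * k) \<le> real n * (pi/3 + \<delta>)" using sum by (simp add: sum_negf)
    have "(\<Sum>j<n. pi/3 - \<delta>L) \<le> (\<Sum>j<n. - g j)"
      using neg loL by (intro sum_mono) fastforce
    then have B: "real n * (pi/3 - \<delta>L) \<le> - (2 * pi * k)" using sum by (simp add: sum_negf)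
    define K :: int where "K = 6 * k + int n"
    have oK: "odd K" using odd by (simp add: K_def)
    have A': "pi/3 * (- real_of_int K) \<le> real n * \<delta>" using A by (simp add: K_def algebra_simps)
    have B': "pi/3 * real_of_int K \<le> real n * \<delta>L" using B by (simp add: K_def algebra_simps)
    have "K \<ge> 1 \<or> n mod 6 = 5 \<and> K \<le> -1 \<or> K \<le> -3" using oK odd unfolding K_def by presburger
    then show ?thesis
    proof (elim disjE conjE)
      assume "K \<ge> 1"
      then have "pi/3 * 1 \<le> pi/3 * real_of_int K" by (intro mult_left_mono) auto
      then have "pi/3 \<le> real n * \<delta>L" using B' by linarith
      then show ?thesis by simp
    next
      assume "n mod 6 = 5" "K \<le> -1"
      then have "pi/3 * 1 \<le> pi/3 * (- real_of_int K)" by (intro mult_left_mono) auto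
      then have "pi/3 \<le> real n * \<delta>" using A' by linarith
      then show ?thesis using \<open>n mod 6 = 5\<close> by simp
    next
      assume "K \<le> -3"
      then have "pi/3 * 3 \<le> pi/3 * (- real_of_int K)" by (intro mult_left_mono) auto
      then have "pi \<le> real n * \<delta>" using A' by linarith
      then show ?thesis using big by simp
    qed
  qed
qed


lemma sin_lower3:
  fixes z :: real
  assumes "0 \<le> z"
  shows "z - z^3/6 \<le> sin z"
proof -
  have e: "(\<Sum>m<3. sin_coeff m * z ^ m) = z"
    by (simp add: eval_nat_numeral sin_coeff_def)
  have "\<bar>sin z - z\<bar> \<le> inverse (fact 3) * \<bar>z\<bar> ^ 3"
    using Maclaurin_sin_bound[of z 3] unfolding e .
  moreover have "inverse (fact 3) * \<bar>z\<bar> ^ 3 = z^3/6" using assms by (simp add: eval_nat_numeral)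
  ultimately have "\<bar>sin z - z\<bar> \<le> z^3/6" by simp
  then have "-(sin z - z) \<le> z^3/6" unfolding abs_le_iff by blast
  then show ?thesis by linarith
qed

lemma special_ineq:
  fixes n :: real
  assumes n3: "3 \<le> n"
  shows "4 * sin (pi/6 - pi/(6 * n)) * sin (pi/6 * (n/(n-1))) \<le> 1"
proof -
  define p where "p = pi/(12 * n * (n-1))"
  define X where "X = pi/(6 * n)"
  define Y where "Y = pi/(6 * (n-1))"
  define t where "t = Y - X"
  define z where "z = (X+Y)/2"
  have n1: "0 < n - 1" "0 < n" using n3 by auto
  have eY: "pi/6 * (n/(n-1)) = pi/6 + Y" unfolding Y_def using n1 by (simp add: field_simps)
  have et: "t = 2 * p" unfolding t_def X_def Y_def p_def using n1 by (simp add: field_simps)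
  have ez: "z = (2 * n-1) * p" unfolding z_def X_def Y_def p_def using n1 by (simp add: field_simps)
  have p0: "0 < p" unfolding p_def using n1 by simp
  have s3: "sqrt 3 ^ 2 = 3" by simp
  have prod: "4 * sin (pi/6 - X) * sin (pi/6 + Y) = 2 * cos (X+Y) - 2 * cos (pi/3 + t)"
    unfolding t_def
    apply (simp add: sin_diff sin_add cos_add cos_diff trig_consts)
    using sin_cos_squared_add[of X] sin_cos_squared_add[of Y] s3 by algebra
  have c1: "cos (pi/3 + t) = cos t / 2 - sqrt 3 / 2 * sin t"
    by (simp add: cos_add trig_consts)
  have t0: "0 \<le> t" using et p0 by simp
  have st: "sin t \<le> t" using t0 by (rule sin_x_le_x)
  have ct: "1 - cos t \<le> t^2/2"
  proof -
    have "cos t = 1 - 2 * sin (t/2) ^ 2" using cos_double_sin[of "t/2"] by simp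
    moreover have "sin (t/2) ^ 2 \<le> (t/2)^2"
      using abs_sin_x_le_abs_x[of "t/2"] by (metis abs_le_square_iff)
    ultimately show ?thesis by (simp add: power_divide)
  qed
  have cz: "1 - cos (X+Y) = 2 * sin z ^ 2"
  proof -
    have e2: "2 * z = X+Y" by (simp add: z_def)
    show ?thesis using cos_double_sin[of z] unfolding e2 by simp
  qed
  have z0: "0 \<le> z" using ez p0 n3 by simp
    have pi3: "3 < pi" by (rule pi_gt3)
  have pi4: "pi < 4" by (rule pi_less_4)
  have ratio: "(2 * n-1) \<le> 5/6 * (n * (n-1))"
  proof -
    have "0 \<le> (5 * n - 2) * (n - 3)" using n3 by simp
    then show ?thesis by (simp add: algebra_simps)
  qed
  have zb: "z \<le> 1/3"
  proof -
    have "z = pi * (2 * n-1)/(12 * n * (n-1))" unfolding z_def X_def Y_def using n1 by (simp add: field_simps)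
    also have "\<dots> \<le> 4 * (5/6 * (n * (n-1)))/(12 * n * (n-1))"
      using ratio pi4 n3 n1 by (intro divide_right_mono mult_mono) auto
    also have "\<dots> = 5/18" using n1 by (simp add: field_simps)
    finally show ?thesis by simp
  qed
  have pb: "p \<le> 1/18"
  proof -
    have "6 \<le> n * (n-1)" using n3 mult_mono[of 3 n 2 "n-1"] by simp
    then have "12 * 6 \<le> 12 * n * (n-1)" by simp
    then have "pi/(12 * n * (n-1)) \<le> 4/(12 * 6)"
      using pi4 n1 by (intro frac_le) auto
    then show ?thesis by (simp add: p_def)
  qed
  have q: "53/54 \<le> 1 - z^2/6"
  proof -
    have "z^2 \<le> (1/3)^2" using z0 zb by (intro power_mono) auto
    then have "z^2 \<le> 1/9" by (simp add: power_divide)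
    then show ?thesis by simp
  qed
  have sz: "z * (1 - z^2/6) \<le> sin z" using sin_lower3[OF z0] by (simp add: algebra_simps power3_eq_cube power2_eq_square)
  have szq: "0 \<le> z * (1 - z^2/6)" using z0 q by simp
  have "(z * (1 - z^2/6))^2 \<le> sin z ^ 2" using sz szq by (intro power_mono) auto
  moreover have "z^2 * (53/54)^2 \<le> (z * (1 - z^2/6))^2"
  proof -
    have "(53/54)^2 \<le> (1 - z^2/6)^2" using q by (intro power_mono) auto
    then show ?thesis by (simp add: power_mult_distrib mult_left_mono)
  qed
  moreover have "z^2 \<ge> pi/3 * p"
  proof -
    have "(2 * n-1)^2 \<ge> 4 * (n * (n-1))" by (simp add: power2_eq_square algebra_simps)
    have "(2 * n-1)^2 * p = pi * (2 * n-1)^2/(12 * n * (n-1))" by (simp add: p_def)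
    also have "\<dots> \<ge> pi * (4 * (n * (n-1)))/(12 * n * (n-1))"
      using \<open>(2 * n-1)^2 \<ge> 4 * (n * (n-1))\<close> n1 by (intro divide_right_mono mult_left_mono) auto
    also have "pi * (4 * (n * (n-1)))/(12 * n * (n-1)) = pi/3" using n1 by (simp add: field_simps)
    finally have A: "pi/3 \<le> (2 * n-1)^2 * p" .
    have "z^2 = ((2 * n-1)^2 * p) * p" using ez by (simp add: power2_eq_square)
    moreover have "pi/3 * p \<le> ((2 * n-1)^2 * p) * p" using A p0 by (intro mult_right_mono) auto
    ultimately show ?thesis by simp
  qed
  ultimately have zlow: "pi/3 * p * (53/54)^2 \<le> sin z ^ 2"
    by (smt (verit) mult_right_mono zero_le_power2)
  have sq3: "sqrt 3 \<le> 7/4"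
    by (rule real_le_lsqrt) (auto simp: power2_eq_square)
  have "sqrt 3 / 2 * sin t + (1 - cos t)/2 \<le> sqrt 3/2 * t + t^2/4"
    using st ct by (intro add_mono mult_left_mono) auto
  also have "\<dots> = p * (sqrt 3 + p)" using et by (simp add: power2_eq_square algebra_simps)
  also have "\<dots> \<le> p * (7/4 + 1/18)" using sq3 pb p0 by (intro mult_left_mono) auto
  also have "\<dots> \<le> 2 * (pi/3 * p * (53/54)^2)" using pi3 p0 by (simp add: power2_eq_square)
  also have "\<dots> \<le> 2 * sin z ^ 2" using zlow by simp
  finally have key: "sqrt 3 / 2 * sin t + (1 - cos t)/2 \<le> 1 - cos (X+Y)" using cz by simp
  have "4 * sin (pi/6 - pi/(6 * n)) * sin (pi/6 * (n/(n-1))) = 2 * cos (X+Y) - 2 * cos (pi/3 + t)"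
    unfolding eY X_def[symmetric] by (rule prod)
  also have "\<dots> \<le> 1" using key c1 by (simp add: field_simps)
  finally show ?thesis .
qed


definition Fn :: "nat \<Rightarrow> real" where
  "Fn n = (if n mod 6 = 1 \<or> n mod 6 = 3 then 2 * sin (pi / 6 * (real n / (real n - 1)))
           else 2 * sin (pi / 6 * ((real n + 1) / real n)))"

lemma conv_gen:
  fixes w t R :: real
  assumes "0 \<le> w" "w \<le> t" "t \<le> pi" "R = 2 * cos w"
  shows "2 * sin (pi/2 - t) \<le> R"
proof -
  have "cos t \<le> cos w" using assms by (intro cos_monotone_0_pi_le) auto
  then show ?thesis using assms by (simp add: cos_sin_eq)
qed

lemma conv1:
  fixes n :: nat and w R :: real
  assumes n: "2 \<le> n" and w: "0 \<le> w" and R: "R = 2 * cos w"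
    and h: "pi/3 \<le> (real n - 1) * (2 * pi/3 - 2 * w)"
  shows "2 * sin (pi / 6 * (real n / (real n - 1))) \<le> R"
proof -
  have n1: "0 < real n - 1" using n by simp
  define e where "e = pi/(3 * (real n - 1))"
  have "e \<le> 2 * pi/3 - 2 * w" using h n1 by (simp add: e_def field_simps)
  moreover have "pi/(6 * (real n - 1)) = e/2" by (simp add: e_def)
  ultimately have wt: "w \<le> pi/3 - pi/(6 * (real n - 1))" by linarith
  have "0 \<le> pi/(6 * (real n - 1))" using n1 by simp
  then have tle: "pi/3 - pi/(6 * (real n - 1)) \<le> pi" using pi_gt_zero by linarith
  have "2 * sin (pi/2 - (pi/3 - pi/(6 * (real n - 1)))) \<le> R"
    by (rule conv_gen[OF w wt tle R])
  moreover have "pi/2 - (pi/3 - pi/(6 * (real n - 1))) = pi / 6 * (real n / (real n - 1))"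
    using n1 by (simp add: field_simps)
  ultimately show ?thesis by simp
qed

lemma conv2:
  fixes n :: nat and w R :: real
  assumes n: "1 \<le> n" and w: "0 \<le> w" and R: "R = 2 * cos w"
    and h: "pi/3 \<le> real n * (2 * pi/3 - 2 * w)"
  shows "2 * sin (pi / 6 * ((real n + 1) / real n)) \<le> R"
proof -
  have n1: "0 < real n" using n by simp
  define e where "e = pi/(3 * real n)"
  have "e \<le> 2 * pi/3 - 2 * w" using h n1 by (simp add: e_def field_simps)
  moreover have "pi/(6 * real n) = e/2" by (simp add: e_def)
  ultimately have wt: "w \<le> pi/3 - pi/(6 * real n)" by linarith
  have "0 \<le> pi/(6 * real n)" by simp
  then have tle: "pi/3 - pi/(6 * real n) \<le> pi" using pi_gt_zero by linarith
  have "2 * sin (pi/2 - (pi/3 - pi/(6 * real n))) \<le> R"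
    by (rule conv_gen[OF w wt tle R])
  moreover have "pi/2 - (pi/3 - pi/(6 * real n)) = pi / 6 * ((real n + 1) / real n)"
    using n1 by (simp add: field_simps)
  ultimately show ?thesis by simp
qed

lemma conv3:
  fixes n :: nat and R :: real
  assumes n: "3 \<le> n" and R1: "1 \<le> R"
    and h: "pi/3 \<le> real n * (pi/3 - arccos (1 - 1/(2 * R^2)))"
  shows "2 * sin (pi / 6 * (real n / (real n - 1))) \<le> R"
proof -
  define L where "L = arccos (1 - 1/(2 * R^2))"
  define t where "t = pi/3 - pi/(3 * real n)"
  have n1: "0 < real n" using n by simp
  have R2: "1 \<le> R^2" using R1 by (simp add: one_le_power)
  have q1: "0 < 1/(2 * R^2)" using R1 by simp
  have q2: "1/(2 * R^2) \<le> 1/2" using R2 by (intro divide_left_mono) auto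
  have cL: "cos L = 1 - 1/(2 * R^2)" unfolding L_def by (intro cos_arccos; use q1 q2 in linarith)
  have L0: "0 \<le> L" unfolding L_def by (intro arccos_lbound; use q1 q2 in linarith)
  have "pi/(3 * real n) \<le> pi/3 - L" using h n1 by (simp add: L_def field_simps)
  then have Lt: "L \<le> t" by (simp add: t_def)
  have "0 \<le> pi/(3 * real n)" by simp
  then have t0: "t \<le> pi" unfolding t_def using pi_gt_zero by linarith
  have "cos t \<le> cos L" using L0 Lt t0 by (intro cos_monotone_0_pi_le) auto
  moreover have "cos t = 1 - 2 * sin (t/2) ^ 2" using cos_double_sin[of "t/2"] by simp
  ultimately have "1/(2 * R^2) \<le> 2 * sin (t/2)^2" using cL by simp
  then have "2 * R^2 * (1/(2 * R^2)) \<le> 2 * R^2 * (2 * sin (t/2)^2)" using R2 by (intro mult_left_mono) auto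
  moreover have "2 * R^2 * (1/(2 * R^2)) = 1" using R1 by simp
  ultimately have A: "1 \<le> (2 * R * sin (t/2))^2" by (simp add: power_mult_distrib)
  have th: "t/2 = pi/6 - pi/(6 * real n)" by (simp add: t_def field_simps)
  have s0: "0 < sin (t/2)"
  proof -
    have "pi/(6 * real n) < pi/6" using n n1 by (intro divide_strict_left_mono) auto
    then have a: "0 < pi/6 - pi/(6 * real n)" by simp
    have "0 \<le> pi/(6 * real n)" by simp
    then have b: "pi/6 - pi/(6 * real n) < pi" using pi_gt_zero by linarith
    show ?thesis unfolding th using a b by (rule sin_gt_zero)
  qed
  have B0: "0 \<le> 2 * R * sin (t/2)" using s0 R1 by simp
  have B: "1 \<le> 2 * R * sin (t/2)"
    using power2_le_imp_le[of 1 "2 * R * sin (t/2)"] A B0 by simp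
  define S where "S = sin (pi / 6 * (real n / (real n - 1)))"
  have C0: "4 * sin (pi/6 - pi/(6 * real n)) * S \<le> 1"
    unfolding S_def using special_ineq[of "real n"] n by simp
  have C: "(2* sin (t/2)) * (2 * S) \<le> (2* sin (t/2)) * R"
  proof -
    have "(2* sin (t/2)) * (2 * S) = 4 * sin (pi/6 - pi/(6 * real n)) * S" unfolding th by simp
    also have "\<dots> \<le> 1" by (rule C0)
    also have "1 \<le> 2 * R * sin (t/2)" by (rule B)
    also have "2 * R * sin (t/2) = (2* sin (t/2)) * R" by simp
    finally show ?thesis .
  qed
  have "2 * S \<le> R" using mult_left_le_imp_le[OF C] s0 by simp
  then show ?thesis by (simp add: S_def)
qed


lemma Fn_le_sqrt2:
  assumes "3 \<le> n"
  shows "Fn n \<le> sqrt 2"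
proof -
  have key: "2 * sin x \<le> sqrt 2" if "0 \<le> x" "x \<le> pi/4" for x
  proof -
    have "sin x \<le> sin (pi/4)" using that by (intro sin_monotone_2pi_le) auto
    then show ?thesis by (simp add: sin_45)
  qed
  have n1: "0 < real n - 1" "0 < real n" using assms by auto
  have a1: "pi / 6 * (real n / (real n - 1)) \<le> pi/4"
  proof -
    have "real n / (real n - 1) \<le> 3/2" using n1 assms by (simp add: field_simps)
    then have "pi/6 * (real n / (real n - 1)) \<le> pi/6 * (3/2)" by (intro mult_left_mono) auto
    then show ?thesis by simp
  qed
  have a2: "pi / 6 * ((real n + 1) / real n) \<le> pi/4"
  proof -
    have "(real n + 1) / real n \<le> 3/2" using n1 assms by (simp add: field_simps)
    then have "pi/6 * ((real n + 1) / real n) \<le> pi/6 * (3/2)" by (intro mult_left_mono) auto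
    then show ?thesis by simp
  qed
  show ?thesis unfolding Fn_def using key[OF _ a1] key[OF _ a2] n1 by simp
qed

lemma sin_cmp:
  assumes "3 \<le> n"
  shows "sin (pi / 6 * ((real n + 1) / real n)) \<le> sin (pi / 6 * (real n / (real n - 1)))"
proof -
  have n1: "0 < real n - 1" "0 < real n" using assms by auto
  have "(real n + 1) / real n \<le> real n / (real n - 1)"
    using n1 by (simp add: field_simps)
  moreover have "real n / (real n - 1) \<le> 3/2" using n1 assms by (simp add: field_simps)
  ultimately show ?thesis using n1 by (intro sin_monotone_2pi_le) (auto simp: field_simps)
qed

lemma LB:
  fixes n :: nat and R :: real and x :: "nat \<Rightarrow> complex"
  assumes odd: "odd n" and n3: "3 \<le> n"
    and bnd: "\<forall>j<n. 1 \<le> cmod (x j) \<and> cmod (x j) \<le> R \<and>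
               1 \<le> cmod (x (Suc j mod n) - x j) \<and> cmod (x (Suc j mod n) - x j) \<le> R"
  shows "Fn n \<le> R"
proof -
  have n0: "0 < n" using n3 by simp
  have R1: "1 \<le> R" using bnd n0 by force
  show ?thesis
  proof (cases "2 \<le> R^2")
    case True
    then have "sqrt 2 \<le> sqrt (R^2)" by (rule real_sqrt_le_mono)
    then have "sqrt 2 \<le> R" using R1 by simp
    then show ?thesis using Fn_le_sqrt2[OF n3] by simp
  next
    case False
    then have R2: "R^2 \<le> 2" by simp
    have Rle2: "R \<le> 2"
    proof (rule ccontr)
      assume "\<not> R \<le> 2"
      then have "2 * 2 \<le> R * R" by (intro mult_mono) auto
      then show False using R2 by (simp add: power2_eq_square)
    qed
    define w where "w = arccos (R/2)"
    define u where "u j = arccos (cmod (x j) / 2)" for j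
    define \<mu> where "\<mu> j = pi/3 - u j" for j
    define \<delta> where "\<delta> = 2 * pi/3 - 2 * w"
    define L where "L = arccos (1 - 1/(2 * R^2))"
    define \<delta>L where "\<delta>L = pi/3 - L"
    define g where "g j = Arg (x (Suc j mod n) / x j)" for j
    note W = arccos_props[OF R1 Rle2, folded w_def]
    have xnz: "\<forall>j<n. x j \<noteq> 0" using bnd by force
    have step: "\<bar>g j\<bar> \<le> u j + u (Suc j mod n) + pi/3 - 2 * w \<and>
                u j + u (Suc j mod n) - pi/3 \<le> \<bar>g j\<bar> \<and> L \<le> \<bar>g j\<bar>" if j: "j < n" for j
    proof -
      define P where "P = x j"
      define Q where "Q = x (Suc j mod n)"
      have jn: "Suc j mod n < n" using n0 by simp
      have bP: "1 \<le> cmod P" "cmod P \<le> R" using bnd j by (auto simp: P_def)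
      have bQ: "1 \<le> cmod Q" "cmod Q \<le> R" using bnd jn by (auto simp: Q_def)
      have bZ: "1 \<le> cmod (Q - P)" "cmod (Q - P) \<le> R" using bnd j by (auto simp: P_def Q_def)
      have PQ: "P \<noteq> 0" "Q \<noteq> 0" using bP bQ by auto
      have law: "cmod (Q - P)^2 = cmod P^2 + cmod Q^2 - 2 * cmod P * cmod Q * cos \<bar>g j\<bar>"
        using law_cos[OF PQ] by (simp add: g_def P_def Q_def)
      have a0: "0 \<le> \<bar>g j\<bar>" "\<bar>g j\<bar> \<le> pi"
        using Arg_bounded[of "x (Suc j mod n) / x j"] by (auto simp: g_def)
      have F: "\<bar>g j\<bar> \<le> arccos (cmod P/2) + arccos (cmod Q/2) + pi/3 - 2 * arccos (R/2)"
        by (rule stepF[OF bP(1,2) bQ(1,2) Rle2 _ bZ(2) law a0]) simp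
      have B: "arccos (cmod P/2) + arccos (cmod Q/2) - pi/3 \<le> \<bar>g j\<bar>"
        using bP bQ Rle2 by (intro stepB[OF _ _ _ _ bZ(1) law a0]) auto
      have Lb: "L \<le> \<bar>g j\<bar>"
        unfolding L_def by (rule stepL[OF bP(1,2) bQ(1,2) R2 bZ(1) law a0])
      show ?thesis using F B Lb by (simp add: u_def w_def P_def Q_def)
    qed
    have ub: "w \<le> u j \<and> u j \<le> pi/3" if "j < n" for j
    proof -
      have b: "1 \<le> cmod (x j)" "cmod (x j) \<le> R" using bnd that by auto
      have "arccos (R/2) \<le> arccos (cmod (x j)/2)" using b Rle2 by (intro arccos_le_arccos) auto
      moreover have "u j \<le> pi/3" unfolding u_def using b Rle2 by (intro arccos_props) auto
      ultimately show ?thesis by (simp add: u_def w_def)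
    qed
    have d0: "0 \<le> \<delta>" using W by (simp add: \<delta>_def)
    have mu: "\<forall>j<n. 0 \<le> \<mu> j \<and> \<mu> j \<le> \<delta>/2"
    proof (intro allI impI)
      fix j assume "j < n"
      then have "w \<le> u j" "u j \<le> pi/3" using ub by auto
      moreover have "\<delta>/2 = pi/3 - w" by (simp add: \<delta>_def)
      ultimately show "0 \<le> \<mu> j \<and> \<mu> j \<le> \<delta>/2" unfolding \<mu>_def by auto
    qed
    have up: "\<forall>j<n. \<bar>g j\<bar> \<le> pi/3 + \<delta> - \<mu> j - \<mu> (Suc j mod n)"
    proof (intro allI impI)
      fix j assume j: "j < n"
      have "pi/3 + \<delta> - \<mu> j - \<mu> (Suc j mod n) = u j + u (Suc j mod n) + pi/3 - 2 * w"
        by (simp add: \<mu>_def \<delta>_def)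
      then show "\<bar>g j\<bar> \<le> pi/3 + \<delta> - \<mu> j - \<mu> (Suc j mod n)" using step[OF j] by linarith
    qed
    have lo: "\<forall>j<n. pi/3 - \<mu> j - \<mu> (Suc j mod n) \<le> \<bar>g j\<bar>"
    proof (intro allI impI)
      fix j assume j: "j < n"
      have "pi/3 - \<mu> j - \<mu> (Suc j mod n) = u j + u (Suc j mod n) - pi/3"
        by (simp add: \<mu>_def)
      then show "pi/3 - \<mu> j - \<mu> (Suc j mod n) \<le> \<bar>g j\<bar>" using step[OF j] by linarith
    qed
    have loL: "\<forall>j<n. pi/3 - \<delta>L \<le> \<bar>g j\<bar>"
      using step by (simp add: \<delta>L_def)
    obtain k :: int where k: "(\<Sum>j<n. g j) = 2 * pi * k"
      using winding[OF n0 xnz] by (auto simp: g_def)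
    have Rw: "R = 2 * cos w" using W by simp
    have w0: "0 \<le> w" using W by simp
    have c: "pi/3 \<le> (real n - 1) * \<delta> \<or> pi/3 \<le> real n * \<delta>L \<or> (n mod 6 = 5 \<and> pi/3 \<le> real n * \<delta>)"
      by (rule comb_main[OF odd n3 d0 mu up lo loL k])
    have main: "2 * sin (pi / 6 * (real n / (real n - 1))) \<le> R \<or>
                (n mod 6 = 5 \<and> 2 * sin (pi / 6 * ((real n + 1) / real n)) \<le> R)"
    proof -
      { assume "pi/3 \<le> (real n - 1) * \<delta>"
        then have "2 * sin (pi / 6 * (real n / (real n - 1))) \<le> R"
          using n3 w0 Rw by (intro conv1) (auto simp: \<delta>_def) }
      moreover
      { assume "pi/3 \<le> real n * \<delta>L"
        then have "2 * sin (pi / 6 * (real n / (real n - 1))) \<le> R"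
          using n3 R1 by (intro conv3) (auto simp: \<delta>L_def L_def) }
      moreover
      { assume "n mod 6 = 5" "pi/3 \<le> real n * \<delta>"
        then have "2 * sin (pi / 6 * ((real n + 1) / real n)) \<le> R"
          using n3 w0 Rw by (intro conv2) (auto simp: \<delta>_def) }
      ultimately show ?thesis using c by blast
    qed
    have n6: "n mod 6 = 1 \<or> n mod 6 = 3 \<or> n mod 6 = 5" using odd by presburger
    show ?thesis
      using main n6 sin_cmp[OF n3] unfolding Fn_def by auto
  qed
qed


lemma flow_balance:
  fixes E :: "'a set set" and D :: "('a \<times> 'a) set" and \<phi> :: "'a \<times> 'a \<Rightarrow> complex"
  assumes ori: "orientation E D" and fin: "finite {u. {v,u} \<in> E}" and noloop: "{v} \<notin> E"
  shows "(\<Sum>a\<in>{a\<in>D. fst a = v}. \<phi> a) - (\<Sum>a\<in>{a\<in>D. snd a = v}. \<phi> a)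
       = (\<Sum>u\<in>{u. {v,u} \<in> E}. (if (v,u) \<in> D then \<phi> (v,u) else - \<phi> (u,v)))"
proof -
  define N where "N = {u. {v,u} \<in> E}"
  have arcE: "{fst a, snd a} \<in> E" if "a \<in> D" for a using ori that by (auto simp: orientation_def)
  have uniq: "\<exists>!a. a \<in> D \<and> {fst a, snd a} = e" if "e \<in> E" for e
    using ori that by (auto simp: orientation_def)
  have out: "{a\<in>D. fst a = v} = (\<lambda>u. (v,u)) ` {u\<in>N. (v,u) \<in> D}"
  proof (rule set_eqI, rule iffI)
    fix a assume "a \<in> {a\<in>D. fst a = v}"
    then have a: "a \<in> D" "fst a = v" by auto
    have "{v, snd a} \<in> E" using arcE[OF a(1)] a(2) by simp
    moreover have ae: "a = (v, snd a)" using a(2) by (cases a) simp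
    ultimately have "snd a \<in> {u\<in>N. (v,u) \<in> D}" using a(1) by (simp add: N_def)
    then show "a \<in> (\<lambda>u. (v,u)) ` {u\<in>N. (v,u) \<in> D}" using ae by (rule rev_image_eqI)
  next
    fix a assume "a \<in> (\<lambda>u. (v,u)) ` {u\<in>N. (v,u) \<in> D}"
    then show "a \<in> {a\<in>D. fst a = v}" by auto
  qed
  have inn: "{a\<in>D. snd a = v} = (\<lambda>u. (u,v)) ` {u\<in>N. (u,v) \<in> D}"
  proof (rule set_eqI, rule iffI)
    fix a assume "a \<in> {a\<in>D. snd a = v}"
    then have a: "a \<in> D" "snd a = v" by auto
    have "{fst a, v} \<in> E" using arcE[OF a(1)] a(2) by simp
    then have "{v, fst a} \<in> E" by (simp add: insert_commute)
    moreover have ae: "a = (fst a, v)" using a(2) by (cases a) simp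
    ultimately have "fst a \<in> {u\<in>N. (u,v) \<in> D}" using a(1) by (simp add: N_def)
    then show "a \<in> (\<lambda>u. (u,v)) ` {u\<in>N. (u,v) \<in> D}" using ae by (rule rev_image_eqI)
  next
    fix a assume "a \<in> (\<lambda>u. (u,v)) ` {u\<in>N. (u,v) \<in> D}"
    then show "a \<in> {a\<in>D. snd a = v}" by auto
  qed
  have xor: "(v,u) \<notin> D \<longleftrightarrow> (u,v) \<in> D" if "u \<in> N" for u
  proof -
    have e: "{v,u} \<in> E" using that by (simp add: N_def)
    have uv: "u \<noteq> v" using e noloop by auto
    obtain a where a: "a \<in> D" "{fst a, snd a} = {v,u}" using uniq[OF e] by blast
    have "a = (v,u) \<or> a = (u,v)" using a(2) by (cases a) (auto simp: doubleton_eq_iff)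
    moreover have "\<not> ((v,u) \<in> D \<and> (u,v) \<in> D)"
    proof
      assume "(v,u) \<in> D \<and> (u,v) \<in> D"
      then have p1: "(v,u) \<in> D \<and> {fst (v,u), snd (v,u)} = {v,u}"
        and p2: "(u,v) \<in> D \<and> {fst (u,v), snd (u,v)} = {v,u}" by (auto simp: insert_commute)
      have "(v,u) = (u,v)" using uniq[OF e] p1 p2 by blast
      then show False using uv by simp
    qed
    ultimately show ?thesis using a(1) by auto
  qed
  have finN: "finite N" using fin by (simp add: N_def)
  have "(\<Sum>a\<in>{a\<in>D. fst a = v}. \<phi> a) = (\<Sum>u\<in>{u\<in>N. (v,u) \<in> D}. \<phi> (v,u))"
    unfolding out by (subst sum.reindex) (auto simp: inj_on_def)
  moreover have "(\<Sum>a\<in>{a\<in>D. snd a = v}. \<phi> a) = (\<Sum>u\<in>{u\<in>N. (u,v) \<in> D}. \<phi> (u,v))"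
    unfolding inn by (subst sum.reindex) (auto simp: inj_on_def)
  moreover have "{u\<in>N. (u,v) \<in> D} = {u\<in>N. (v,u) \<notin> D}" using xor by auto
  moreover have "(\<Sum>u\<in>N. (if (v,u) \<in> D then \<phi> (v,u) else - \<phi> (u,v)))
      = (\<Sum>u\<in>{u\<in>N. (v,u) \<in> D}. \<phi> (v,u)) + (\<Sum>u\<in>{u\<in>N. (v,u) \<notin> D}. - \<phi> (u,v))"
    using finN by (simp add: sum.If_cases Int_def)
  ultimately show ?thesis by (simp add: N_def sum_negf)
qed


definition nb :: "nat \<Rightarrow> nat \<Rightarrow> nat" where "nb n j = (j + 1) mod n"
definition pv :: "nat \<Rightarrow> nat \<Rightarrow> nat" where "pv n j = (j + n - 1) mod n"

lemma nbpv:
  assumes n: "3 \<le> n" and j: "j < n"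
  shows "nb n j < n" "pv n j < n" "nb n (pv n j) = j" "pv n (nb n j) = j"
    "nb n j \<noteq> j" "pv n j \<noteq> j" "nb n j \<noteq> pv n j" "nb n (nb n j) \<noteq> j"
proof -
  have n0: "0 < n" using n by simp
  show "nb n j < n" "pv n j < n" using n0 by (auto simp: nb_def pv_def)
  consider (a) "j + 1 < n" "0 < j" | (b) "j + 1 = n" | (c) "j = 0" using j n by linarith
  then have all: "nb n (pv n j) = j \<and> pv n (nb n j) = j \<and> nb n j \<noteq> j \<and> pv n j \<noteq> j \<and> nb n j \<noteq> pv n j
      \<and> nb n (nb n j) \<noteq> j"
  proof cases
    case a
    have e1: "(j + 1) mod n = j + 1" using a by simp
    have e2: "(j + n - 1) mod n = j - 1"
    proof -
      have "(j + n - 1) mod n = (j + n - 1 - n) mod n" using a by (intro le_mod_geq) auto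
      also have "\<dots> = j - 1" using a j by simp
      finally show ?thesis .
    qed
    have e3: "(j - 1 + 1) mod n = j" using a j by simp
    have e4: "(j + 1 + n - 1) mod n = j" using j by simp
    have e5: "(j + 1 + 1) mod n \<noteq> j"
    proof (cases "j + 2 < n")
      case True then show ?thesis by simp
    next
      case False then have "j + 2 = n" using a by simp
      then show ?thesis using a by simp
    qed
    show ?thesis unfolding nb_def pv_def e1 e2 using e3 e4 e5 a by auto
  next
    case b
    have e1: "(j + 1) mod n = 0" using b by simp
    have e2: "(j + n - 1) mod n = j - 1"
    proof -
      have "(j + n - 1) mod n = (j + n - 1 - n) mod n" using b n by (intro le_mod_geq) auto
      also have "\<dots> = j - 1" using b j n by simp
      finally show ?thesis .
    qed
    have e3: "(j - 1 + 1) mod n = j" using b n by simp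
    have e4: "(0 + n - 1) mod n = j" using b by simp
    have e5: "(0 + 1) mod n \<noteq> j" using b n by simp
    show ?thesis unfolding nb_def pv_def e1 e2 using e3 e4 e5 b n by auto
  next
    case c
    have e1: "(j + 1) mod n = 1" using c n by simp
    have e2: "(j + n - 1) mod n = n - 1" using c n by simp
    have e3: "(n - 1 + 1) mod n = 0" using n by simp
    have e4: "(1 + n - 1) mod n = 0" by simp
    have e5: "(1 + 1) mod n \<noteq> 0" using n by simp
    show ?thesis unfolding nb_def pv_def e1 e2 using e3 e4 e5 c n by auto
  qed
  then show "nb n (pv n j) = j" "pv n (nb n j) = j" "nb n j \<noteq> j" "pv n j \<noteq> j"
    "nb n j \<noteq> pv n j" "nb n (nb n j) \<noteq> j" by auto
qed

lemma nb_inj: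
  assumes n: "3 \<le> n" and "i < n" "j < n" "nb n i = j"
  shows "i = pv n j"
  using nbpv[OF n assms(2)] assms by auto

lemma edge_iff:
  "{p,q} \<in> prism_edges n \<longleftrightarrow>
     (\<exists>b i. i < n \<and> ((p = (b,i) \<and> q = (b, nb n i)) \<or> (q = (b,i) \<and> p = (b, nb n i)))) \<or>
     (\<exists>i<n. (p = (False,i) \<and> q = (True,i)) \<or> (p = (True,i) \<and> q = (False,i)))"
  unfolding prism_edges_def nb_def by (auto simp: doubleton_eq_iff)

lemma prism_nbrs:
  assumes n: "3 \<le> n" and j: "j < n"
  shows "{u. {(b,j), u} \<in> prism_edges n} = {(b, nb n j), (b, pv n j), (\<not> b, j)}"
proof (rule set_eqI, rule iffI)
  fix u assume "u \<in> {u. {(b,j), u} \<in> prism_edges n}"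
  then have "{(b,j), u} \<in> prism_edges n" by simp
  then consider (A) b' i where "i < n" "(b,j) = (b',i)" "u = (b', nb n i)"
    | (B) b' i where "i < n" "u = (b',i)" "(b,j) = (b', nb n i)"
    | (C) i where "i < n" "((b,j) = (False,i) \<and> u = (True,i)) \<or> ((b,j) = (True,i) \<and> u = (False,i))"
    unfolding edge_iff by blast
  then show "u \<in> {(b, nb n j), (b, pv n j), (\<not> b, j)}"
  proof cases
    case A then show ?thesis by auto
  next
    case B
    then have "i = pv n j" using nb_inj[OF n] j by auto
    then show ?thesis using B by auto
  next
    case C then show ?thesis by auto
  qed
next
  fix u assume u: "u \<in> {(b, nb n j), (b, pv n j), (\<not> b, j)}"
  have pj: "pv n j < n" "nb n (pv n j) = j" using nbpv[OF n j] by auto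
  show "u \<in> {u. {(b,j), u} \<in> prism_edges n}"
  proof -
    { assume "u = (b, nb n j)"
      then have ?thesis unfolding mem_Collect_eq edge_iff using j by blast }
    moreover
    { assume "u = (b, pv n j)"
      then have ?thesis unfolding mem_Collect_eq edge_iff using pj
        by (intro disjI1 exI[of _ b] exI[of _ "pv n j"]) auto }
    moreover
    { assume "u = (\<not> b, j)"
      then have ?thesis unfolding mem_Collect_eq edge_iff using j by (cases b) auto }
    ultimately show ?thesis using u by blast
  qed
qed

lemma prism_noloop:
  assumes n: "3 \<le> n"
  shows "{v} \<notin> prism_edges n"
proof
  assume "{v} \<in> prism_edges n"
  then have "{v,v} \<in> prism_edges n" by simp
  then show False unfolding edge_iff using nbpv(5)[OF n] by force
qed


lemma orient_xor:
  assumes ori: "orientation E D" and e: "{v,u} \<in> E" and uv: "u \<noteq> v"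
  shows "(v,u) \<notin> D \<longleftrightarrow> (u,v) \<in> D"
proof -
  have uniq: "\<exists>!a. a \<in> D \<and> {fst a, snd a} = {v,u}" using ori e by (auto simp: orientation_def)
  obtain a where a: "a \<in> D" "{fst a, snd a} = {v,u}" using uniq by blast
  have "a = (v,u) \<or> a = (u,v)" using a(2) by (cases a) (auto simp: doubleton_eq_iff)
  moreover have "\<not> ((v,u) \<in> D \<and> (u,v) \<in> D)"
  proof
    assume "(v,u) \<in> D \<and> (u,v) \<in> D"
    then have p1: "(v,u) \<in> D \<and> {fst (v,u), snd (v,u)} = {v,u}"
      and p2: "(u,v) \<in> D \<and> {fst (u,v), snd (u,v)} = {v,u}" by (auto simp: insert_commute)
    have "(v,u) = (u,v)" using uniq p1 p2 by blast
    then show False using uv by simp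
  qed
  ultimately show ?thesis using a(1) by auto
qed

definition Fl :: "('a \<times> 'a) set \<Rightarrow> ('a \<times> 'a \<Rightarrow> complex) \<Rightarrow> 'a \<Rightarrow> 'a \<Rightarrow> complex" where
  "Fl D \<phi> v u = (if (v,u) \<in> D then \<phi> (v,u) else - \<phi> (u,v))"

lemma Fl_anti:
  assumes ori: "orientation E D" and e: "{v,u} \<in> E" and uv: "u \<noteq> v"
  shows "Fl D \<phi> u v = - Fl D \<phi> v u"
  using orient_xor[OF ori e uv] by (auto simp: Fl_def)

lemma Fl_bnd:
  assumes ori: "orientation E D" and e: "{v,u} \<in> E" and uv: "u \<noteq> v"
    and b: "\<forall>a\<in>D. 1 \<le> cmod (\<phi> a) \<and> cmod (\<phi> a) \<le> r - 1"
  shows "1 \<le> cmod (Fl D \<phi> v u) \<and> cmod (Fl D \<phi> v u) \<le> r - 1"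
  using orient_xor[OF ori e uv] b by (auto simp: Fl_def)

lemma flow_extract:
  assumes n: "3 \<le> n" and fl: "complex_nz_flow (prism_vertices n) (prism_edges n) r"
  shows "\<exists>x. \<forall>j<n. 1 \<le> cmod (x j) \<and> cmod (x j) \<le> r - 1 \<and>
            1 \<le> cmod (x (Suc j mod n) - x j) \<and> cmod (x (Suc j mod n) - x j) \<le> r - 1"
proof -
  define E where "E = prism_edges n"
  obtain D and \<phi> :: "(bool \<times> nat) \<times> (bool \<times> nat) \<Rightarrow> complex" where
    ori: "orientation E D" and b: "\<forall>a\<in>D. 1 \<le> cmod (\<phi> a) \<and> cmod (\<phi> a) \<le> r - 1"
    and kir: "\<forall>v\<in>prism_vertices n. (\<Sum>a\<in>{a\<in>D. snd a = v}. \<phi> a) = (\<Sum>a\<in>{a\<in>D. fst a = v}. \<phi> a)"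
    using fl unfolding complex_nz_flow_def E_def by blast
  define F where "F = Fl D \<phi>"
  have bal: "F (False,j) (False, nb n j) + F (False,j) (False, pv n j) + F (False,j) (True,j) = 0"
    if j: "j < n" for j
  proof -
    define v where "v = (False,j)"
    have N: "{u. {v,u} \<in> E} = {(False, nb n j), (False, pv n j), (True, j)}"
      unfolding v_def E_def using prism_nbrs[OF n j, of False] by simp
    have nl: "{v} \<notin> E" unfolding E_def by (rule prism_noloop[OF n])
    have vV: "v \<in> prism_vertices n" using j by (simp add: v_def prism_vertices_def)
    have "(\<Sum>a\<in>{a\<in>D. fst a = v}. \<phi> a) - (\<Sum>a\<in>{a\<in>D. snd a = v}. \<phi> a)
        = (\<Sum>u\<in>{u. {v,u} \<in> E}. F v u)"
      unfolding F_def Fl_def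
      by (rule flow_balance[OF ori]) (simp_all add: N nl)
    moreover have "(\<Sum>a\<in>{a\<in>D. fst a = v}. \<phi> a) - (\<Sum>a\<in>{a\<in>D. snd a = v}. \<phi> a) = 0"
      using kir vV by simp
    moreover have "(\<Sum>u\<in>{u. {v,u} \<in> E}. F v u)
        = F v (False, nb n j) + F v (False, pv n j) + F v (True,j)"
      unfolding N using nbpv[OF n j] by (simp add: add.assoc)
    ultimately show ?thesis by (simp add: v_def)
  qed
  have edge: "{(False,j), (False, nb n j)} \<in> E" if "j < n" for j
    unfolding E_def edge_iff using that by blast
  have spoke: "{(False,j), (True,j)} \<in> E" if "j < n" for j
    unfolding E_def edge_iff using that by blast
  define x where "x j = F (False,j) (False, nb n j)" for j
  show ?thesis
  proof (intro exI allI impI)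
    fix j assume j: "j < n"
    define j' where "j' = nb n j"
    have j': "j' < n" "pv n j' = j" using nbpv[OF n j] by (auto simp: j'_def)
    have sj: "Suc j mod n = j'" by (simp add: j'_def nb_def)
    have ne1: "(False, nb n j) \<noteq> (False, j)" using nbpv[OF n j] by simp
    have b1: "1 \<le> cmod (x j) \<and> cmod (x j) \<le> r - 1"
      unfolding x_def F_def by (rule Fl_bnd[OF ori edge[OF j] ne1 b])
    have an: "F (False,j') (False,j) = - x j"
      unfolding x_def F_def j'_def by (rule Fl_anti[OF ori edge[OF j] ne1])
    have "F (False,j') (False, nb n j') + F (False,j') (False, pv n j') + F (False,j') (True,j') = 0"
      by (rule bal[OF j'(1)])
    then have s: "F (False,j') (True,j') = x j - x j'"
      using an j'(2) by (simp add: x_def algebra_simps)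
    have "1 \<le> cmod (F (False,j') (True,j')) \<and> cmod (F (False,j') (True,j')) \<le> r - 1"
      unfolding F_def by (rule Fl_bnd[OF ori spoke[OF j'(1)] _ b]) simp
    then have b2: "1 \<le> cmod (x j' - x j) \<and> cmod (x j' - x j) \<le> r - 1"
      using s by (simp add: norm_minus_commute)
    show "1 \<le> cmod (x j) \<and> cmod (x j) \<le> r - 1 \<and>
          1 \<le> cmod (x (Suc j mod n) - x j) \<and> cmod (x (Suc j mod n) - x j) \<le> r - 1"
      using b1 b2 sj by simp
  qed
qed


definition ori :: "nat \<Rightarrow> bool \<times> nat \<Rightarrow> bool \<times> nat \<Rightarrow> bool" where
  "ori n p q \<longleftrightarrow> (fst p = fst q \<and> snd q = nb n (snd p)) \<or> (fst p = False \<and> fst q = True \<and> snd p = snd q)"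

lemma construct:
  fixes x :: "nat \<Rightarrow> complex" and R :: real
  assumes n: "3 \<le> n"
    and bnd: "\<forall>j<n. 1 \<le> cmod (x j) \<and> cmod (x j) \<le> R \<and>
               1 \<le> cmod (x (Suc j mod n) - x j) \<and> cmod (x (Suc j mod n) - x j) \<le> R"
  shows "complex_nz_flow (prism_vertices n) (prism_edges n) (R + 1)"
proof -
  define E where "E = prism_edges n"
  define D where "D = {(p,q). {p,q} \<in> E \<and> ori n p q}"
  define \<phi> :: "(bool \<times> nat) \<times> (bool \<times> nat) \<Rightarrow> complex" where "\<phi> a = (if fst (fst a) = fst (snd a) then (if fst (fst a) then - x (snd (fst a)) else x (snd (fst a)))
                         else x (pv n (snd (fst a))) - x (snd (fst a)))" for a
  have bnd2: "1 \<le> cmod (x (pv n i) - x i) \<and> cmod (x (pv n i) - x i) \<le> R" if i: "i < n" for i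
  proof -
    have p: "pv n i < n" "nb n (pv n i) = i" using nbpv[OF n i] by auto
    have "Suc (pv n i) mod n = i" using p(2) by (simp add: nb_def)
    then show ?thesis using bnd p(1) by (force simp: norm_minus_commute)
  qed
  have oriD: "orientation E D"
    unfolding orientation_def
  proof (intro conjI ballI)
    fix a assume "a \<in> D" then show "{fst a, snd a} \<in> E" by (auto simp: D_def)
  next
    fix e assume e: "e \<in> E"
    then consider (L) b i where "i < n" "e = {(b,i), (b, nb n i)}" | (S) i where "i < n" "e = {(False,i), (True,i)}"
      unfolding E_def prism_edges_def nb_def by blast
    then show "\<exists>!a. a \<in> D \<and> {fst a, snd a} = e"
    proof cases
      case L
      have nn: "nb n (nb n i) \<noteq> i" using nbpv[OF n L(1)] by simp
      show ?thesis
      proof (rule ex1I[of _ "((b,i),(b,nb n i))"])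
        show "((b,i),(b,nb n i)) \<in> D \<and> {fst ((b,i),(b,nb n i)), snd ((b,i),(b,nb n i))} = e"
          using e L by (simp add: D_def ori_def)
      next
        fix a assume a: "a \<in> D \<and> {fst a, snd a} = e"
        then have "a = ((b,i),(b,nb n i)) \<or> a = ((b,nb n i),(b,i))"
          using L by (cases a) (auto simp: doubleton_eq_iff)
        moreover have "a \<noteq> ((b,nb n i),(b,i))" using a nn by (auto simp: D_def ori_def)
        ultimately show "a = ((b,i),(b,nb n i))" by blast
      qed
    next
      case S
      show ?thesis
      proof (rule ex1I[of _ "((False,i),(True,i))"])
        show "((False,i),(True,i)) \<in> D \<and> {fst ((False,i),(True,i)), snd ((False,i),(True,i))} = e"
          using e S by (simp add: D_def ori_def)
      next
        fix a assume a: "a \<in> D \<and> {fst a, snd a} = e"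
        then have "a = ((False,i),(True,i)) \<or> a = ((True,i),(False,i))"
          using S by (cases a) (auto simp: doubleton_eq_iff)
        moreover have "a \<noteq> ((True,i),(False,i))" using a by (auto simp: D_def ori_def)
        ultimately show "a = ((False,i),(True,i))" by blast
      qed
    qed
  qed
  have bD: "\<forall>a\<in>D. 1 \<le> cmod (\<phi> a) \<and> cmod (\<phi> a) \<le> R + 1 - 1"
  proof
    fix a assume a: "a \<in> D"
    obtain p q where pq: "a = (p,q)" by (cases a)
    have eq: "{p,q} \<in> prism_edges n" and o: "ori n p q" using a pq by (auto simp: D_def E_def)
    have sn: "snd p < n"
      using eq n unfolding prism_edges_def by (auto simp: doubleton_eq_iff)
    have "(fst p = fst q \<and> snd q = nb n (snd p)) \<or> (fst p = False \<and> fst q = True \<and> snd p = snd q)"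
      using o by (simp add: ori_def)
    then show "1 \<le> cmod (\<phi> a) \<and> cmod (\<phi> a) \<le> R + 1 - 1"
    proof
      assume h: "fst p = fst q \<and> snd q = nb n (snd p)"
      have "1 \<le> cmod (x (snd p)) \<and> cmod (x (snd p)) \<le> R" using bnd sn by auto
      then show ?thesis using h pq by (simp add: \<phi>_def)
    next
      assume h: "fst p = False \<and> fst q = True \<and> snd p = snd q"
      then show ?thesis using bnd2[OF sn] pq by (simp add: \<phi>_def)
    qed
  qed
  have kir: "(\<Sum>a\<in>{a\<in>D. snd a = v}. \<phi> a) = (\<Sum>a\<in>{a\<in>D. fst a = v}. \<phi> a)"
    if v: "v \<in> prism_vertices n" for v
  proof -
    obtain b j where bj: "v = (b,j)" "j < n" using v by (auto simp: prism_vertices_def)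
    have N: "{u. {v,u} \<in> E} = {(b, nb n j), (b, pv n j), (\<not> b, j)}"
      unfolding bj E_def using prism_nbrs[OF n bj(2)] by simp
    have nl: "{v} \<notin> E" unfolding E_def by (rule prism_noloop[OF n])
    note P = nbpv[OF n bj(2)]
    have e1: "{(b,j), (b, nb n j)} \<in> E" unfolding E_def edge_iff using bj by blast
    have e2: "{(b, pv n j), (b,j)} \<in> E" unfolding E_def edge_iff using P
      by (intro disjI1 exI[of _ b] exI[of _ "pv n j"]) auto
    have e2': "{(b,j), (b, pv n j)} \<in> E" using e2 by (simp add: insert_commute)
    have e3: "{(False,j), (True,j)} \<in> E" unfolding E_def edge_iff using bj by blast
    have e3': "{(True,j), (False,j)} \<in> E" using e3 by (simp add: insert_commute)
    have m1: "((b,j),(b, nb n j)) \<in> D" using e1 by (simp add: D_def ori_def)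
    have m2: "((b,j),(b, pv n j)) \<notin> D" using P by (simp add: D_def ori_def)
    have m3: "((False,j),(True,j)) \<in> D" using e3 by (simp add: D_def ori_def)
    have m4: "((True,j),(False,j)) \<notin> D" by (simp add: D_def ori_def)
    have "(\<Sum>a\<in>{a\<in>D. fst a = v}. \<phi> a) - (\<Sum>a\<in>{a\<in>D. snd a = v}. \<phi> a)
        = (\<Sum>u\<in>{u. {v,u} \<in> E}. (if (v,u) \<in> D then \<phi> (v,u) else - \<phi> (u,v)))"
      by (rule flow_balance[OF oriD]) (simp_all add: N nl)
    also have "\<dots> = 0"
    proof -
      define f where "f u = (if (v,u) \<in> D then \<phi> (v,u) else - \<phi> (u,v))" for u
      have d1: "(b, nb n j) \<noteq> (b, pv n j)" using P by simp
      have "(\<Sum>u\<in>{(b, nb n j), (b, pv n j), (\<not> b, j)}. f u) = f (b, nb n j) + (f (b, pv n j) + f (\<not> b, j))"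
        using d1 by simp
      moreover have "f (b, nb n j) = (if b then - x j else x j)"
        using m1 by (simp add: f_def bj \<phi>_def)
      moreover have "f (b, pv n j) = - (if b then - x (pv n j) else x (pv n j))"
        using m2 by (simp add: f_def bj \<phi>_def)
      moreover have "f (\<not> b, j) = (if b then - (x (pv n j) - x j) else x (pv n j) - x j)"
      proof (cases b)
        case True then show ?thesis using m4 by (simp add: f_def bj \<phi>_def)
      next
        case False then show ?thesis using m3 by (simp add: f_def bj \<phi>_def)
      qed
      ultimately have "(\<Sum>u\<in>{(b, nb n j), (b, pv n j), (\<not> b, j)}. f u) = 0"
        by (cases b) simp_all
      then show ?thesis unfolding N f_def .
    qed
    finally show ?thesis by simp
  qed
  have oriD': "orientation (prism_edges n) D" using oriD by (simp add: E_def)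
  show ?thesis
    unfolding complex_nz_flow_def
    by (intro exI[of _ D] exI[of _ \<phi>] conjI oriD' bD ballI kir)
qed


lemma chord: "cmod (cis a - cis b) = 2 * \<bar>sin ((a - b)/2)\<bar>"
proof -
  have "cmod (cis a - cis b)^2 = (cos a - cos b)^2 + (sin a - sin b)^2"
    by (simp add: cmod_power2)
  also have "\<dots> = 2 - 2 * cos (a - b)"
    using sin_cos_squared_add[of a] sin_cos_squared_add[of b]
    by (simp add: cos_diff power2_eq_square algebra_simps)
  also have "\<dots> = (2 * \<bar>sin ((a - b)/2)\<bar>)^2"
  proof -
    have e: "2 * ((a-b)/2) = a - b" by simp
    show ?thesis using cos_double_sin[of "(a-b)/2"] unfolding e by (simp add: power_mult_distrib)
  qed
  finally show ?thesis
    by (rule power2_eq_imp_eq) auto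
qed

lemma cis_shift: "cis (2 * pi * real m + a) = cis a"
proof -
  have "cis (2 * pi * real m + a) = cis (2 * pi * real m) * cis a" by (rule cis_mult[symmetric])
  moreover have "cis (2 * pi * real m) = 1"
    by (rule cis_multiple_2pi) simp
  ultimately show ?thesis by simp
qed

lemma cis60: "cmod (1 - cis (pi/3)) = 1"
  using chord[of 0 "pi/3"] by (simp add: sin_30)

lemma chord_step:
  assumes "0 < \<theta>" "\<theta> < 2 * pi"
  shows "cmod (cis (real (Suc j) * \<theta>) - cis (real j * \<theta>)) = 2 * sin (\<theta>/2)"
proof -
  have "0 < sin (\<theta>/2)" using assms by (intro sin_gt_zero) auto
  moreover have "real (Suc j) * \<theta> - real j * \<theta> = \<theta>" by (simp add: algebra_simps)
  ultimately show ?thesis using chord[of "real (Suc j) * \<theta>" "real j * \<theta>"] by simp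
qed

lemma sin_half_ge:
  assumes "pi/6 \<le> t" "t \<le> pi/2"
  shows "1 \<le> 2 * sin t"
proof -
  have "sin (pi/6) \<le> sin t" using assms by (intro sin_ge_sym) auto
  then show ?thesis by (simp add: sin_30)
qed

lemma ex_even:
  assumes n: "3 \<le> n" and ev: "even n"
  shows "\<exists>x. \<forall>j<n. 1 \<le> cmod (x j) \<and> cmod (x j) \<le> 1 \<and>
            1 \<le> cmod (x (Suc j mod n) - x j) \<and> cmod (x (Suc j mod n) - x j) \<le> 1"
proof -
  define x :: "nat \<Rightarrow> complex" where "x j = (if even j then 1 else cis (pi/3))" for j
  have c1: "cmod (cis (pi/3) - 1) = 1" using cis60 by (simp add: norm_minus_commute)
  show ?thesis
  proof (intro exI allI impI)
    fix j assume j: "j < n"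
    have a: "cmod (x j) = 1" by (simp add: x_def)
    have b: "cmod (x (Suc j mod n) - x j) = 1"
    proof (cases "Suc j < n")
      case True
      then show ?thesis using cis60 c1 by (simp add: x_def)
    next
      case False
      then have "Suc j = n" using j by simp
      then have "Suc j mod n = 0" "odd j" using ev by auto
      then show ?thesis using cis60 by (simp add: x_def)
    qed
    show "1 \<le> cmod (x j) \<and> cmod (x j) \<le> 1 \<and>
          1 \<le> cmod (x (Suc j mod n) - x j) \<and> cmod (x (Suc j mod n) - x j) \<le> 1"
      using a b by simp
  qed
qed

lemma ex_odd5:
  assumes n: "3 \<le> n" and n5: "n mod 6 = 5"
  shows "\<exists>x. \<forall>j<n. 1 \<le> cmod (x j) \<and> cmod (x j) \<le> 2 * sin (pi / 6 * ((real n + 1) / real n)) \<and>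
            1 \<le> cmod (x (Suc j mod n) - x j) \<and>
            cmod (x (Suc j mod n) - x j) \<le> 2 * sin (pi / 6 * ((real n + 1) / real n))"
proof -
  define \<theta> where "\<theta> = pi/3 * ((real n + 1) / real n)"
  define R where "R = 2 * sin (pi / 6 * ((real n + 1) / real n))"
  obtain m where m: "n = 6 * m + 5" using n5 by (metis div_mod_decomp mult.commute)
  have n0: "0 < real n" using n by simp
  have th: "\<theta>/2 = pi / 6 * ((real n + 1) / real n)" by (simp add: \<theta>_def)
  have t1: "pi/6 \<le> \<theta>/2" unfolding th using n0 by (simp add: field_simps)
  have t2: "\<theta>/2 \<le> pi/2" unfolding th using n0 n by (simp add: field_simps)
  have R1: "1 \<le> R" unfolding R_def th[symmetric] using t1 t2 by (rule sin_half_ge)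
  have tp1: "0 < \<theta>" using t1 pi_gt_zero by linarith
  have tp2: "\<theta> < 2 * pi" using t2 pi_gt_zero by linarith
  note tpos = tp1 tp2
  have step: "cmod (cis (real (Suc j) * \<theta>) - cis (real j * \<theta>)) = R" for j
    using chord_step[OF tpos, of j] by (simp add: R_def th)
  have full: "real n * \<theta> = 2 * pi * real (m+1) + 0"
    unfolding \<theta>_def using n0 m by (simp add: field_simps)
  define x :: "nat \<Rightarrow> complex" where "x j = cis (real j * \<theta>)" for j
  show ?thesis
  proof (intro exI allI impI)
    fix j assume j: "j < n"
    have a: "cmod (x j) = 1" by (simp add: x_def)
    have b: "cmod (x (Suc j mod n) - x j) = R"
    proof (cases "Suc j < n")
      case True
      then show ?thesis using step[of j] by (simp add: x_def)
    next
      case False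
      then have sj: "Suc j = n" using j by simp
      have "x (Suc j mod n) = cis (real (Suc j) * \<theta>)"
        using sj full cis_shift[of "m+1" 0] by (simp add: x_def)
      then show ?thesis using step[of j] by (simp add: x_def)
    qed
    show "1 \<le> cmod (x j) \<and> cmod (x j) \<le> 2 * sin (pi / 6 * ((real n + 1) / real n)) \<and>
          1 \<le> cmod (x (Suc j mod n) - x j) \<and>
          cmod (x (Suc j mod n) - x j) \<le> 2 * sin (pi / 6 * ((real n + 1) / real n))"
      using a b R1 by (simp add: R_def)
  qed
qed

lemma theta_facts:
  assumes n: "3 \<le> n" and \<theta>_def: "\<theta> = pi/3 * (real n / (real n - 1))"
  shows "\<theta>/2 = pi / 6 * (real n / (real n - 1))" "1 \<le> 2 * sin (\<theta>/2)" "0 < \<theta>" "\<theta> < 2 * pi"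
    "(real n - 1) * \<theta> = real n * pi / 3"
proof -
  have n1: "0 < real n - 1" using n by simp
  show th: "\<theta>/2 = pi / 6 * (real n / (real n - 1))" by (simp add: \<theta>_def)
  have t1: "pi/6 \<le> \<theta>/2" unfolding th using n1 by (simp add: field_simps)
  have t2: "\<theta>/2 \<le> pi/2" unfolding th using n1 n by (simp add: field_simps)
  show "1 \<le> 2 * sin (\<theta>/2)" using t1 t2 by (rule sin_half_ge)
  show "0 < \<theta>" using t1 pi_gt_zero by linarith
  show "\<theta> < 2 * pi" using t2 pi_gt_zero by linarith
  show "(real n - 1) * \<theta> = real n * pi / 3" unfolding \<theta>_def using n1 by (simp add: field_simps)
qed

lemma ex_odd1:
  assumes n: "3 \<le> n" and n1: "n mod 6 = 1"
  shows "\<exists>x. \<forall>j<n. 1 \<le> cmod (x j) \<and> cmod (x j) \<le> 2 * sin (pi / 6 * (real n / (real n - 1))) \<and>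
            1 \<le> cmod (x (Suc j mod n) - x j) \<and>
            cmod (x (Suc j mod n) - x j) \<le> 2 * sin (pi / 6 * (real n / (real n - 1)))"
proof -
  define \<theta> where "\<theta> = pi/3 * (real n / (real n - 1))"
  define R where "R = 2 * sin (pi / 6 * (real n / (real n - 1)))"
  note T = theta_facts[OF n \<theta>_def]
  obtain m where m: "n = 6 * m + 1" using n1 by (metis div_mod_decomp mult.commute)
  have R1: "1 \<le> R" using T(2) unfolding T(1) R_def .
  have step: "cmod (cis (real (Suc j) * \<theta>) - cis (real j * \<theta>)) = R" for j
    using chord_step[OF T(3,4), of j] T(1) by (simp add: R_def)
  have last: "real (n - 1) * \<theta> = 2 * pi * real m + pi/3"
    using T(5) m n by (simp add: of_nat_diff field_simps)
  define x :: "nat \<Rightarrow> complex" where "x j = cis (real j * \<theta>)" for j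
  show ?thesis
  proof (intro exI allI impI)
    fix j assume j: "j < n"
    have a: "cmod (x j) = 1" by (simp add: x_def)
    have b: "1 \<le> cmod (x (Suc j mod n) - x j) \<and> cmod (x (Suc j mod n) - x j) \<le> R"
    proof (cases "Suc j < n")
      case True
      then show ?thesis using step[of j] R1 by (simp add: x_def)
    next
      case False
      then have sj: "j = n - 1" using j by simp
      have "x j = cis (pi/3)" unfolding x_def sj last cis_shift ..
      moreover have "x (Suc j mod n) = 1" using sj n by (simp add: x_def)
      ultimately show ?thesis using cis60 R1 by simp
    qed
    show "1 \<le> cmod (x j) \<and> cmod (x j) \<le> 2 * sin (pi / 6 * (real n / (real n - 1))) \<and>
          1 \<le> cmod (x (Suc j mod n) - x j) \<and>
          cmod (x (Suc j mod n) - x j) \<le> 2 * sin (pi / 6 * (real n / (real n - 1)))"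
      using a b R1 by (simp add: R_def)
  qed
qed

lemma ex_odd3:
  assumes n: "3 \<le> n" and n3: "n mod 6 = 3"
  shows "\<exists>x. \<forall>j<n. 1 \<le> cmod (x j) \<and> cmod (x j) \<le> 2 * sin (pi / 6 * (real n / (real n - 1))) \<and>
            1 \<le> cmod (x (Suc j mod n) - x j) \<and>
            cmod (x (Suc j mod n) - x j) \<le> 2 * sin (pi / 6 * (real n / (real n - 1)))"
proof -
  define \<theta> where "\<theta> = pi/3 * (real n / (real n - 1))"
  define R where "R = 2 * sin (pi / 6 * (real n / (real n - 1)))"
  note T = theta_facts[OF n \<theta>_def]
  obtain m where m: "n = 6 * m + 3" using n3 by (metis div_mod_decomp mult.commute)
  have R1: "1 \<le> R" using T(2) unfolding T(1) R_def .
  have step: "cmod (cis (real (Suc j) * \<theta>) - cis (real j * \<theta>)) = R" for j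
    using chord_step[OF T(3,4), of j] T(1) by (simp add: R_def)
  have sth: "0 < sin (\<theta>/2)" using T(3,4) by (intro sin_gt_zero) auto
  have cR: "cmod (1 - cis (-\<theta>)) = R"
    using chord[of 0 "-\<theta>"] sth T(1) by (simp add: R_def)
  have pen: "(real n - 2) * \<theta> = 2 * pi * real m + (pi - \<theta>)"
  proof -
    have "(real n - 2) * \<theta> = (real n - 1) * \<theta> - \<theta>" by (simp add: algebra_simps)
    also have "\<dots> = 2 * pi * real m + (pi - \<theta>)" unfolding T(5) using m by (simp add: field_simps)
    finally show ?thesis .
  qed
  have cpen: "cis (pi - \<theta>) = - cis (-\<theta>)" by (simp add: complex_eq_iff)
  define x :: "nat \<Rightarrow> complex" where "x j = (if j = n - 1 then 1 - cis (-\<theta>) else cis (real j * \<theta>))" for j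
  show ?thesis
  proof (intro exI allI impI)
    fix j assume j: "j < n"
    have a: "1 \<le> cmod (x j) \<and> cmod (x j) \<le> R" using cR R1 by (simp add: x_def)
    have b: "1 \<le> cmod (x (Suc j mod n) - x j) \<and> cmod (x (Suc j mod n) - x j) \<le> R"
    proof -
      consider (A) "Suc j < n - 1" | (B) "j = n - 2" | (C) "j = n - 1" using j by linarith
      then show ?thesis
      proof cases
        case A
        then have "x (Suc j mod n) - x j = cis (real (Suc j) * \<theta>) - cis (real j * \<theta>)"
          by (simp add: x_def)
        then show ?thesis using step[of j] R1 by simp
      next
        case B
        have ne: "j \<noteq> n - 1" using B n by simp
        have xj0: "x j = cis ((real n - 2) * \<theta>)" using B n ne by (simp add: x_def of_nat_diff)
        have xj: "x j = - cis (-\<theta>)" unfolding xj0 pen cis_shift cpen ..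
        have "Suc j mod n = n - 1" using B n by simp
        then have "x (Suc j mod n) = 1 - cis (-\<theta>)" by (simp add: x_def)
        then show ?thesis using xj R1 by simp
      next
        case C
        have "Suc j mod n = 0" using C n by simp
        then have "x (Suc j mod n) = 1" using n by (simp add: x_def)
        moreover have "x j = 1 - cis (-\<theta>)" using C by (simp add: x_def)
        ultimately show ?thesis using R1 by simp
      qed
    qed
    show "1 \<le> cmod (x j) \<and> cmod (x j) \<le> 2 * sin (pi / 6 * (real n / (real n - 1))) \<and>
          1 \<le> cmod (x (Suc j mod n) - x j) \<and>
          cmod (x (Suc j mod n) - x j) \<le> 2 * sin (pi / 6 * (real n / (real n - 1)))"
      using a b by (simp add: R_def)
  qed
qed

theorem corollary3:
  fixes n :: nat
  assumes "n \<ge> 3"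
  shows "complex_flow_number (prism_vertices n) (prism_edges n) =
    (if even n then 2
     else if n mod 6 = 1 \<or> n mod 6 = 3 then 1 + 2 * sin (pi / 6 * (real n / (real n - 1)))
     else 1 + 2 * sin (pi / 6 * ((real n + 1) / real n)))"
proof -
  have n: "3 \<le> n" using assms by simp
  define S where "S = {r. r \<ge> 2 \<and> complex_nz_flow (prism_vertices n) (prism_edges n) r}"
  define v where "v = (if even n then 2
     else if n mod 6 = 1 \<or> n mod 6 = 3 then 1 + 2 * sin (pi / 6 * (real n / (real n - 1)))
     else 1 + 2 * sin (pi / 6 * ((real n + 1) / real n)))"
  have mem: "v \<in> S" and low: "\<forall>r\<in>S. v \<le> r"
  proof -
    have "v \<in> S \<and> (\<forall>r\<in>S. v \<le> r)"
    proof (cases "even n")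
      case True
      then have v2: "v = 2" by (simp add: v_def)
      obtain x :: "nat \<Rightarrow> complex" where x: "\<forall>j<n. 1 \<le> cmod (x j) \<and> cmod (x j) \<le> 1 \<and>
            1 \<le> cmod (x (Suc j mod n) - x j) \<and> cmod (x (Suc j mod n) - x j) \<le> 1"
        using ex_even[OF n True] by blast
      have "complex_nz_flow (prism_vertices n) (prism_edges n) (1 + 1)"
        by (rule construct[OF n x])
      then have "v \<in> S" by (simp add: S_def v2)
      moreover have "\<forall>r\<in>S. v \<le> r" by (simp add: S_def v2)
      ultimately show ?thesis by simp
    next
      case False
      then have vF: "v = 1 + Fn n" by (simp add: v_def Fn_def)
      have odd: "odd n" using False by simp
      have ex: "\<exists>x. \<forall>j<n. 1 \<le> cmod (x j) \<and> cmod (x j) \<le> Fn n \<and>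
            1 \<le> cmod (x (Suc j mod n) - x j) \<and> cmod (x (Suc j mod n) - x j) \<le> Fn n"
      proof -
        have "n mod 6 = 1 \<or> n mod 6 = 3 \<or> n mod 6 = 5" using odd by presburger
        moreover
        { assume "n mod 6 = 1"
          then have ?thesis using ex_odd1[OF n] by (simp add: Fn_def) }
        moreover
        { assume "n mod 6 = 3"
          then have ?thesis using ex_odd3[OF n] by (simp add: Fn_def) }
        moreover
        { assume "n mod 6 = 5"
          then have ?thesis using ex_odd5[OF n] by (simp add: Fn_def) }
        ultimately show ?thesis by blast
      qed
      then obtain x :: "nat \<Rightarrow> complex" where x: "\<forall>j<n. 1 \<le> cmod (x j) \<and> cmod (x j) \<le> Fn n \<and>
            1 \<le> cmod (x (Suc j mod n) - x j) \<and> cmod (x (Suc j mod n) - x j) \<le> Fn n" by blast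
      have F1: "1 \<le> Fn n" using x n by force
      have "complex_nz_flow (prism_vertices n) (prism_edges n) (Fn n + 1)"
        by (rule construct[OF n x])
      then have "v \<in> S" using F1 by (simp add: S_def vF add.commute)
      moreover have "\<forall>r\<in>S. v \<le> r"
      proof
        fix r assume "r \<in> S"
        then have fl: "complex_nz_flow (prism_vertices n) (prism_edges n) r" by (simp add: S_def)
        obtain y :: "nat \<Rightarrow> complex" where y: "\<forall>j<n. 1 \<le> cmod (y j) \<and> cmod (y j) \<le> r - 1 \<and>
            1 \<le> cmod (y (Suc j mod n) - y j) \<and> cmod (y (Suc j mod n) - y j) \<le> r - 1"
          using flow_extract[OF n fl] by blast
        have "Fn n \<le> r - 1" by (rule LB[OF odd n y])
        then show "v \<le> r" by (simp add: vF)
      qed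
      ultimately show ?thesis by simp
    qed
    then show "v \<in> S" "\<forall>r\<in>S. v \<le> r" by auto
  qed
  have "Inf S = v" using mem low by (intro cInf_eq_minimum) auto
  then show ?thesis unfolding complex_flow_number_def S_def v_def .
qed

end
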